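(* Let $d\in\mathbb{N}$, let $\mathcal{H}$ be a separable Hilbert space, $\Lambda\simeq\mathbb{Z}^d\subset\mathbb{R}^d$ a lattice, and $\{P(k)\}_{k\in\mathbb{R}^d}$ a family of orthogonal projectors on $\mathcal{H}$ of finite rank $m$ satisfying (P1)–(P4) below. Let $\Phi=(\phi_1,\dots,\phi_m):\mathbb{R}^d\to\mathcal{H}^m$ be a map such that for every $k$, $\{\phi_a(k)\}$ is an orthonormal basis of $\operatorname{Ran}P(k)$, each $\phi_a$ is continuous, $\phi_a(k+\lambda)=\tau_\lambda\phi_a(k)$ and $\phi_a(-k)=\Theta\phi_a(k)$ for all $k\in\mathbb{R}^d$, $\lambda\in\Lambda$, $a$. Then for every $\varepsilon>0$ there exists $\Phi_{\rm sm}=(\psi_1,\dots,\psi_m):\mathbb{R}^d\to\mathcal{H}^m$ with the same properties (orthonormal basis of $\operatorname{Ran}P(k)$ for every $k$, $\tau$-equivariance, time-reversal invariance) and in addition each $\psi_a$ is $C^\infty$-smooth, such that $\sup_{k\in\mathbb{R}^d}\big(\sum_{a=1}^m\|\phi_a(k)-\psi_a(k)\|_{\mathcal{H}}^2\big)^{1/2}<\varepsilon$.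
   Context: (P1) $k\mapsto P(k)\in\mathcal{B}(\mathcal{H})$ is $C^\infty$-smooth in operator norm. (P2) $\tau:\Lambda\to\mathcal{U}(\mathcal{H})$, $\lambda\mapsto\tau_\lambda$, is a unitary representation with $P(k+\lambda)=\tau_\lambda P(k)\tau_\lambda^{-1}$. (P3) $\Theta$ is an antiunitary operator on $\mathcal{H}$ (surjective antilinear with $\langle\Theta\phi,\Theta\psi\rangle=\langle\psi,\phi\rangle$) with $P(-k)=\Theta P(k)\Theta^{-1}$ and $\Theta^2=\mathrm{Id}$. (P4) $\Theta\tau_\lambda=\tau_\lambda^{-1}\Theta$ for all $\lambda\in\Lambda$. *)

theory Defs
  imports "HOL-Analysis.Analysis"
begin

text \<open>A complex inner product space: a real inner product space carrying a complex
scalar multiplication compatible with the real one, and a complex inner product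
(antilinear in the first argument, physics convention) whose real part is the real
inner product; hence the norm is the Hilbert norm sqrt (Re (cinner x x)).
A complex Hilbert space is then a type of class complex_inner_space and complete_space.\<close>

class complex_inner_space = real_inner +
  fixes scaleC :: "complex \<Rightarrow> 'a \<Rightarrow> 'a" (infixr "*\<^sub>C" 75)
    and cinner :: "'a \<Rightarrow> 'a \<Rightarrow> complex"
  assumes scaleC_add_right: "a *\<^sub>C (x + y) = a *\<^sub>C x + a *\<^sub>C y"
    and scaleC_add_left: "(a + b) *\<^sub>C x = a *\<^sub>C x + b *\<^sub>C x"
    and scaleC_scaleC: "a *\<^sub>C (b *\<^sub>C x) = (a * b) *\<^sub>C x"
    and scaleC_one: "1 *\<^sub>C x = x"
    and scaleR_scaleC: "r *\<^sub>R x = complex_of_real r *\<^sub>C x"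
    and cinner_commute: "cinner x y = cnj (cinner y x)"
    and cinner_add_left: "cinner (x + y) z = cinner x z + cinner y z"
    and cinner_scaleC_left: "cinner (a *\<^sub>C x) y = cnj a * cinner x y"
    and inner_cinner: "inner x y = Re (cinner x y)"

definition separable_space :: "'a::topological_space itself \<Rightarrow> bool" where
  "separable_space _ \<longleftrightarrow> (\<exists>D::'a set. countable D \<and> closure D = UNIV)"

definition clinear :: "('a::complex_inner_space \<Rightarrow> 'b::complex_inner_space) \<Rightarrow> bool" where
  "clinear T \<longleftrightarrow> (\<forall>x y. T (x + y) = T x + T y) \<and> (\<forall>c x. T (c *\<^sub>C x) = c *\<^sub>C T x)"

definition antilinear :: "('a::complex_inner_space \<Rightarrow> 'b::complex_inner_space) \<Rightarrow> bool" where
  "antilinear T \<longleftrightarrow> (\<forall>x y. T (x + y) = T x + T y) \<and> (\<forall>c x. T (c *\<^sub>C x) = cnj c *\<^sub>C T x)"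

definition orth_projector :: "('h::complex_inner_space \<Rightarrow>\<^sub>L 'h) \<Rightarrow> bool" where
  "orth_projector P \<longleftrightarrow> clinear (blinfun_apply P)
     \<and> (\<forall>x. P (P x) = P x) \<and> (\<forall>x y. cinner (P x) y = cinner x (P y))"

definition unitary_op :: "('h::complex_inner_space \<Rightarrow> 'h) \<Rightarrow> bool" where
  "unitary_op U \<longleftrightarrow> clinear U \<and> surj U \<and> (\<forall>x y. cinner (U x) (U y) = cinner x y)"

definition antiunitary_op :: "('h::complex_inner_space \<Rightarrow> 'h) \<Rightarrow> bool" where
  "antiunitary_op T \<longleftrightarrow> antilinear T \<and> surj T \<and> (\<forall>x y. cinner (T x) (T y) = cinner y x)"

definition cspan :: "'a::complex_inner_space set \<Rightarrow> 'a set" where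
  "cspan S = {x. \<exists>F c. finite F \<and> F \<subseteq> S \<and> x = (\<Sum>v\<in>F. c v *\<^sub>C v)}"

definition cdependent :: "'a::complex_inner_space set \<Rightarrow> bool" where
  "cdependent S \<longleftrightarrow> (\<exists>F c v. finite F \<and> F \<subseteq> S \<and> v \<in> F \<and> c v \<noteq> 0 \<and> (\<Sum>w\<in>F. c w *\<^sub>C w) = 0)"

definition has_cdim :: "'a::complex_inner_space set \<Rightarrow> nat \<Rightarrow> bool" where
  "has_cdim V n \<longleftrightarrow> (\<exists>B. finite B \<and> card B = n \<and> \<not> cdependent B \<and> cspan B = V)"

definition is_lattice :: "(real^'d) set \<Rightarrow> bool" where
  "is_lattice L \<longleftrightarrow> (\<exists>B :: real^'d^'d. invertible B \<and>
      L = range (\<lambda>n :: 'd \<Rightarrow> int. B *v (\<chi> i. real_of_int (n i))))"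

definition unitary_rep :: "(real^'d) set \<Rightarrow> (real^'d \<Rightarrow> 'h::complex_inner_space \<Rightarrow> 'h) \<Rightarrow> bool" where
  "unitary_rep L tau \<longleftrightarrow> (\<forall>l\<in>L. unitary_op (tau l)) \<and> tau 0 = id
     \<and> (\<forall>l\<in>L. \<forall>l'\<in>L. tau (l + l') = tau l \<circ> tau l')"

text \<open>C^\<infinity>-smoothness on the whole of a finite dimensional space: all iterated partial
derivatives exist and are (Frechet) differentiable everywhere (hence continuous).\<close>
inductive_set iter_partials :: "('a::euclidean_space \<Rightarrow> 'b::real_normed_vector) \<Rightarrow> ('a \<Rightarrow> 'b) set"
  for f where
  base: "f \<in> iter_partials f"
| step: "g \<in> iter_partials f \<Longrightarrow> i \<in> Basis \<Longrightarrow> (\<lambda>x. frechet_derivative g (at x) i) \<in> iter_partials f"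

definition smooth_fun :: "('a::euclidean_space \<Rightarrow> 'b::real_normed_vector) \<Rightarrow> bool" where
  "smooth_fun f \<longleftrightarrow> (\<forall>g\<in>iter_partials f. \<forall>x. g differentiable (at x))"

definition is_onb_frame :: "(real^'d \<Rightarrow> 'h \<Rightarrow>\<^sub>L 'h) \<Rightarrow> nat \<Rightarrow> (nat \<Rightarrow> real^'d \<Rightarrow> 'h::complex_inner_space) \<Rightarrow> real^'d \<Rightarrow> bool" where
  "is_onb_frame P m Phi k \<longleftrightarrow>
     (\<forall>a\<in>{1..m}. \<forall>b\<in>{1..m}. cinner (Phi a k) (Phi b k) = (if a = b then 1 else 0))
     \<and> cspan ((\<lambda>a. Phi a k) ` {1..m}) = range (blinfun_apply (P k))"

end

theory Submission
  imports Defs "HOL-Computational_Algebra.Polynomial" "HOL-Library.FuncSet"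
begin


definition pd :: "('a::euclidean_space \<Rightarrow> 'b::real_normed_vector) \<Rightarrow> 'a \<Rightarrow> 'a \<Rightarrow> 'b" where
  "pd f i = (\<lambda>x. frechet_derivative f (at x) i)"

lemma sm_diff: "smooth_fun f \<Longrightarrow> f differentiable (at x)"
  unfolding smooth_fun_def using iter_partials.base by blast

lemma iter_partials_pd: "g \<in> iter_partials (pd f i) \<Longrightarrow> i \<in> Basis \<Longrightarrow> g \<in> iter_partials f"
proof (induction g rule: iter_partials.induct)
  case base
  then show ?case unfolding pd_def by (intro iter_partials.step iter_partials.base)
next
  case (step g j)
  then show ?case by (intro iter_partials.step) auto
qed

lemma sm_pd: "smooth_fun f \<Longrightarrow> i \<in> Basis \<Longrightarrow> smooth_fun (pd f i)"
  unfolding smooth_fun_def using iter_partials_pd by blast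

lemma sm_coinduct:
  assumes "X f"
    and "\<And>g x. X g \<Longrightarrow> g differentiable (at x)"
    and "\<And>g i. X g \<Longrightarrow> i \<in> Basis \<Longrightarrow> X (pd g i)"
  shows "smooth_fun f"
proof -
  have "X g" if "g \<in> iter_partials f" for g
    using that
  proof (induction g rule: iter_partials.induct)
    case base then show ?case using assms(1) .
  next
    case (step g i) then show ?case using assms(3)[of g i] unfolding pd_def by auto
  qed
  then show ?thesis unfolding smooth_fun_def using assms(2) by blast
qed

lemma pd_eq: "(\<And>x. (f has_derivative D x) (at x)) \<Longrightarrow> pd f i = (\<lambda>x. D x i)"
  unfolding pd_def using frechet_derivative_at by metis

lemma pd_eq': "smooth_fun f \<Longrightarrow> (f has_derivative (\<lambda>h. \<Sum>i\<in>Basis. (h \<bullet> i) *\<^sub>R pd f i x)) (at x)"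
proof -
  assume "smooth_fun f"
  then have d: "(f has_derivative frechet_derivative f (at x)) (at x)"
    using sm_diff frechet_derivative_works by blast
  have l: "linear (frechet_derivative f (at x))" using d has_derivative_linear by blast
  have "frechet_derivative f (at x) = (\<lambda>h. \<Sum>i\<in>Basis. (h \<bullet> i) *\<^sub>R pd f i x)"
  proof
    fix h
    have "frechet_derivative f (at x) h = frechet_derivative f (at x) (\<Sum>i\<in>Basis. (h \<bullet> i) *\<^sub>R i)"
      by (simp add: euclidean_representation)
    also have "\<dots> = (\<Sum>i\<in>Basis. (h \<bullet> i) *\<^sub>R pd f i x)"
      using l by (simp add: linear_sum linear_scale pd_def)
    finally show "frechet_derivative f (at x) h = (\<Sum>i\<in>Basis. (h \<bullet> i) *\<^sub>R pd f i x)" .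
  qed
  then show ?thesis using d by simp
qed

lemma smooth_has_derivative: "smooth_fun f \<Longrightarrow> (f has_derivative frechet_derivative f (at x)) (at x)"
  using sm_diff frechet_derivative_works by blast

lemma pd_apply: "smooth_fun f \<Longrightarrow> pd f i x = frechet_derivative f (at x) i"
  by (simp add: pd_def)

lemma sm_const: "smooth_fun (\<lambda>x. c)"
  by (rule sm_coinduct[where X="\<lambda>g. \<exists>c. g = (\<lambda>x. c)"])
     (auto simp: pd_eq[OF has_derivative_const])

lemma sm_linear: "bounded_linear L \<Longrightarrow> smooth_fun L"
proof (rule sm_coinduct[where X="\<lambda>g. bounded_linear g \<or> (\<exists>c. g = (\<lambda>x. c))"])
  fix g x assume "bounded_linear g \<or> (\<exists>c. g = (\<lambda>x. c))"
  then show "g differentiable (at x)"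
    using bounded_linear_imp_differentiable by auto
next
  fix g :: "'a \<Rightarrow> 'b" and i
  assume "bounded_linear g \<or> (\<exists>c. g = (\<lambda>x. c))"
  then show "bounded_linear (pd g i) \<or> (\<exists>c. pd g i = (\<lambda>x. c))"
  proof
    assume "bounded_linear g"
    then have "pd g i = (\<lambda>x. g i)" using pd_eq bounded_linear_imp_has_derivative by metis
    then show ?thesis by auto
  next
    assume "\<exists>c. g = (\<lambda>x. c)"
    then show ?thesis using pd_eq[OF has_derivative_const] by auto
  qed
qed simp

lemma sm_add: "smooth_fun f \<Longrightarrow> smooth_fun g \<Longrightarrow> smooth_fun (\<lambda>x. f x + g x)"
proof (rule sm_coinduct[where X="\<lambda>h. \<exists>f g. smooth_fun f \<and> smooth_fun g \<and> h = (\<lambda>x. f x + g x)"])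
  fix h x assume "\<exists>f g. smooth_fun f \<and> smooth_fun g \<and> h = (\<lambda>x. f x + g x)"
  then show "h differentiable (at x)" using sm_diff by (auto intro!: differentiable_add)
next
  fix h :: "'a \<Rightarrow> 'b" and i :: 'a assume "\<exists>f g. smooth_fun f \<and> smooth_fun g \<and> h = (\<lambda>x. f x + g x)"
    and i: "i \<in> Basis"
  then obtain f g where fg: "smooth_fun f" "smooth_fun g" "h = (\<lambda>x. f x + g x)" by blast
  have "pd h i = (\<lambda>x. pd f i x + pd g i x)"
    unfolding fg(3) by (rule pd_eq[where D="\<lambda>x h. frechet_derivative f (at x) h + frechet_derivative g (at x) h", THEN trans])
      (auto intro!: has_derivative_add smooth_has_derivative fg simp: pd_def)
  then show "\<exists>f g. smooth_fun f \<and> smooth_fun g \<and> pd h i = (\<lambda>x. f x + g x)"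
    using sm_pd fg i by blast
qed auto

lemma sm_comp_linear:
  fixes L :: "'b::real_normed_vector \<Rightarrow> 'c::real_normed_vector" and f :: "'a::euclidean_space \<Rightarrow> 'b"
  shows "bounded_linear L \<Longrightarrow> smooth_fun f \<Longrightarrow> smooth_fun (\<lambda>x. L (f x))"
proof (rule sm_coinduct[where X="\<lambda>h. \<exists>f. smooth_fun f \<and> h = (\<lambda>x. L (f x))"])
  fix h x assume L: "bounded_linear L" and "\<exists>f. smooth_fun f \<and> h = (\<lambda>x. L (f x))"
  then obtain f where "smooth_fun f" "h = (\<lambda>x. L (f x))" by blast
  then show "h differentiable (at x)"
    using bounded_linear.has_derivative[OF L smooth_has_derivative] by (auto simp: differentiable_def)
next
  fix h :: "'a \<Rightarrow> 'c" and i :: 'a assume L: "bounded_linear L" and "\<exists>f. smooth_fun f \<and> h = (\<lambda>x. L (f x))" and i: "i \<in> Basis"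
  then obtain f where f: "smooth_fun f" "h = (\<lambda>x. L (f x))" by blast
  have "pd h i = (\<lambda>x. L (pd f i x))"
    unfolding f(2) by (rule pd_eq[where D="\<lambda>x h. L (frechet_derivative f (at x) h)", THEN trans])
      (auto intro!: bounded_linear.has_derivative[OF L] smooth_has_derivative f simp: pd_def)
  then show "\<exists>f. smooth_fun f \<and> pd h i = (\<lambda>x. L (f x))" using sm_pd f i by blast
qed auto

lemma sm_sum: "finite J \<Longrightarrow> (\<And>j. j \<in> J \<Longrightarrow> smooth_fun (F j)) \<Longrightarrow> smooth_fun (\<lambda>x. \<Sum>j\<in>J. F j x)"
proof (induction J rule: finite_induct)
  case empty then show ?case by (simp add: sm_const)
next
  case (insert a J) then show ?case by (simp add: sm_add)
qed

lemma sm_minus: "smooth_fun f \<Longrightarrow> smooth_fun (\<lambda>x. - f x)"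
  using sm_comp_linear[of "\<lambda>x. - x" f] bounded_linear_minus[OF bounded_linear_ident] by simp

lemma sm_diff': "smooth_fun f \<Longrightarrow> smooth_fun g \<Longrightarrow> smooth_fun (\<lambda>x. f x - g x)"
  using sm_add[OF _ sm_minus, of f g] by simp

inductive_set bil_span :: "('b::real_normed_vector \<Rightarrow> 'c::real_normed_vector \<Rightarrow> 'd::real_normed_vector)
     \<Rightarrow> ('a::euclidean_space \<Rightarrow> 'd) set" for bp where
  bprod: "smooth_fun f \<Longrightarrow> smooth_fun g \<Longrightarrow> (\<lambda>x. bp (f x) (g x)) \<in> bil_span bp"
| badd: "h1 \<in> bil_span bp \<Longrightarrow> h2 \<in> bil_span bp \<Longrightarrow> (\<lambda>x. h1 x + h2 x) \<in> bil_span bp"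

lemma bil_span_deriv:
  assumes B: "bounded_bilinear bp"
  shows "h \<in> bil_span bp \<Longrightarrow> (\<forall>x. h differentiable (at x)) \<and> (\<forall>i\<in>Basis. pd h i \<in> bil_span bp)"
proof (induction h rule: bil_span.induct)
  case (bprod f g)
  have d: "((\<lambda>x. bp (f x) (g x)) has_derivative
      (\<lambda>h. bp (f x) (frechet_derivative g (at x) h) + bp (frechet_derivative f (at x) h) (g x))) (at x)" for x
    by (rule bounded_bilinear.FDERIV[OF B]) (auto intro: smooth_has_derivative bprod)
  have "pd (\<lambda>x. bp (f x) (g x)) i = (\<lambda>x. bp (f x) (pd g i x) + bp (pd f i x) (g x))" for i
    by (rule pd_eq[OF d, THEN trans]) (simp add: pd_def)
  then show ?case using d bprod
    by (auto intro!: bil_span.intros sm_pd simp: differentiable_def)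
next
  case (badd h1 h2)
  have d: "((\<lambda>x. h1 x + h2 x) has_derivative
      (\<lambda>h. frechet_derivative h1 (at x) h + frechet_derivative h2 (at x) h)) (at x)" for x
    using badd frechet_derivative_works by (auto intro!: has_derivative_add)
  have "pd (\<lambda>x. h1 x + h2 x) i = (\<lambda>x. pd h1 i x + pd h2 i x)" for i
    by (rule pd_eq[OF d, THEN trans]) (simp add: pd_def)
  then show ?case using d badd
    by (auto intro!: bil_span.intros simp: differentiable_def)
qed

lemma sm_bilinear:
  assumes B: "bounded_bilinear bp" and f: "smooth_fun f" and g: "smooth_fun g"
  shows "smooth_fun (\<lambda>x. bp (f x) (g x))"
  by (rule sm_coinduct[where X="\<lambda>h. h \<in> bil_span bp"])
    (use bil_span_deriv[OF B] f g bil_span.bprod in auto)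

lemma sm_mult: "smooth_fun f \<Longrightarrow> smooth_fun g \<Longrightarrow> smooth_fun (\<lambda>x. f x * (g x :: real))"
  by (rule sm_bilinear[OF bounded_bilinear_mult])

lemma sm_scaleR: "smooth_fun f \<Longrightarrow> smooth_fun g \<Longrightarrow> smooth_fun (\<lambda>x. f x *\<^sub>R g x)"
  by (rule sm_bilinear[OF bounded_bilinear_scaleR])


inductive_set comp_span :: "('i \<Rightarrow> real \<Rightarrow> real) \<Rightarrow> ('a::euclidean_space \<Rightarrow> real) \<Rightarrow> ('a \<Rightarrow> real) set"
  for \<phi> f where
  cterm: "smooth_fun g \<Longrightarrow> (\<lambda>x. g x * \<phi> \<iota> (f x)) \<in> comp_span \<phi> f"
| cadd: "h1 \<in> comp_span \<phi> f \<Longrightarrow> h2 \<in> comp_span \<phi> f \<Longrightarrow> (\<lambda>x. h1 x + h2 x) \<in> comp_span \<phi> f"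

lemma comp_span_deriv:
  assumes f: "smooth_fun f"
    and D: "\<And>\<iota> x. (\<phi> \<iota> has_real_derivative c \<iota> * \<phi> (\<sigma> \<iota>) (f x)) (at (f x))"
  shows "h \<in> comp_span \<phi> f \<Longrightarrow> (\<forall>x. h differentiable (at x)) \<and> (\<forall>i\<in>Basis. pd h i \<in> comp_span \<phi> f)"
proof (induction h rule: comp_span.induct)
  case (cterm g \<iota>)
  have d: "((\<lambda>x. g x * \<phi> \<iota> (f x)) has_derivative
      (\<lambda>h. g x * (frechet_derivative f (at x) h * (c \<iota> * \<phi> (\<sigma> \<iota>) (f x))) + frechet_derivative g (at x) h * \<phi> \<iota> (f x))) (at x)" for x
    by (rule has_derivative_mult[OF smooth_has_derivative[OF cterm] DERIV_compose_FDERIV[OF D smooth_has_derivative[OF f]]])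
  have "pd (\<lambda>x. g x * \<phi> \<iota> (f x)) i = (\<lambda>x. (g x * pd f i x * c \<iota>) * \<phi> (\<sigma> \<iota>) (f x) + pd g i x * \<phi> \<iota> (f x))" for i
    by (rule pd_eq[OF d, THEN trans]) (simp add: pd_def algebra_simps)
  then show ?case using d cterm f
    by (auto intro!: comp_span.intros sm_pd sm_mult sm_const simp: differentiable_def)
next
  case (cadd h1 h2)
  have d: "((\<lambda>x. h1 x + h2 x) has_derivative
      (\<lambda>h. frechet_derivative h1 (at x) h + frechet_derivative h2 (at x) h)) (at x)" for x
    using cadd frechet_derivative_works by (auto intro!: has_derivative_add)
  have "pd (\<lambda>x. h1 x + h2 x) i = (\<lambda>x. pd h1 i x + pd h2 i x)" for i
    by (rule pd_eq[OF d, THEN trans]) (simp add: pd_def)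
  then show ?case using d cadd
    by (auto intro!: comp_span.intros simp: differentiable_def)
qed

lemma sm_compose_family:
  assumes f: "smooth_fun f"
    and D: "\<And>\<iota> x. (\<phi> \<iota> has_real_derivative c \<iota> * \<phi> (\<sigma> \<iota>) (f x)) (at (f x))"
  shows "smooth_fun (\<lambda>x. \<phi> \<iota> (f x))"
proof -
  have "(\<lambda>x. (\<lambda>x. 1) x * \<phi> \<iota> (f x)) \<in> comp_span \<phi> f" by (rule cterm[OF sm_const])
  then have "(\<lambda>x. \<phi> \<iota> (f x)) \<in> comp_span \<phi> f" by simp
  then show ?thesis
    by (rule sm_coinduct[where X="\<lambda>h. h \<in> comp_span \<phi> f"]) (use comp_span_deriv[where \<phi>=\<phi> and c=c and \<sigma>=\<sigma>, OF f D] in auto)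
qed

lemma powr_deriv_const: "0 < s \<Longrightarrow> ((\<lambda>s. s powr r) has_real_derivative r * s powr (r - 1)) (at s)"
proof -
  assume s: "0 < s"
  have "((\<lambda>s. s powr r) has_real_derivative s powr r * (0 * ln s + 1 * r / s)) (at s)"
    by (rule DERIV_powr) (auto intro!: derivative_eq_intros s)
  moreover have "s powr r * (0 * ln s + 1 * r / s) = r * s powr (r - 1)"
    using s by (simp add: powr_diff)
  ultimately show ?thesis by simp
qed

lemma sm_powr:
  fixes f :: "'a::euclidean_space \<Rightarrow> real"
  assumes f: "smooth_fun f" and pos: "\<And>x. 0 < f x"
  shows "smooth_fun (\<lambda>x. f x powr r)"
proof -
  show ?thesis
    using sm_compose_family[where \<phi>="\<lambda>r s. s powr r" and c="\<lambda>r. r" and \<sigma>="\<lambda>r. r - 1" and f=f and \<iota>=r]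
    by (simp add: powr_deriv_const pos f)
qed

definition Eq :: "real poly \<Rightarrow> real \<Rightarrow> real" where
  "Eq q s = (if s > 0 then poly q (1 / s) * exp (- (1 / s)) else 0)"

definition Esig :: "real poly \<Rightarrow> real poly" where
  "Esig q = pCons 0 (pCons 0 (q - pderiv q))"

lemma poly_exp_lim: fixes q :: "real poly" shows "((\<lambda>t. poly q t * t / exp t) \<longlongrightarrow> 0) at_top"
proof -
  have e: "(\<lambda>t. poly q t * t / exp t) = (\<lambda>t. \<Sum>i\<le>degree q. coeff q i * (t ^ Suc i / exp t))"
  proof
    fix t :: real
    have "poly q t * t / exp t = (\<Sum>i\<le>degree q. coeff q i * t ^ i) * (t / exp t)" by (simp add: poly_altdef)
    also have "\<dots> = (\<Sum>i\<le>degree q. coeff q i * t ^ i * (t / exp t))" by (rule sum_distrib_right)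
    also have "\<dots> = (\<Sum>i\<le>degree q. coeff q i * (t ^ Suc i / exp t))"
      by (rule sum.cong) (simp_all add: field_simps)
    finally show "poly q t * t / exp t = (\<Sum>i\<le>degree q. coeff q i * (t ^ Suc i / exp t))" .
  qed
  show ?thesis unfolding e
    by (rule tendsto_null_sum, rule tendsto_mult_right_zero, rule tendsto_power_div_exp_0)
qed

lemma Eq_right_lim: "((\<lambda>y. Eq q y / y) \<longlongrightarrow> 0) (at_right 0)"
proof -
  have "((\<lambda>y. (\<lambda>t. poly q t * t / exp t) (inverse y)) \<longlongrightarrow> 0) (at_right 0)"
    by (rule filterlim_compose[OF poly_exp_lim filterlim_inverse_at_top_right])
  moreover have "eventually (\<lambda>y. (\<lambda>t. poly q t * t / exp t) (inverse y) = Eq q y / y) (at_right 0)"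
  proof (rule eventually_at_rightI[where b=1])
    fix y :: real assume "y \<in> {0<..<1}"
    then have y: "y > 0" by simp
    show "(\<lambda>t. poly q t * t / exp t) (inverse y) = Eq q y / y"
      using y by (simp add: Eq_def exp_minus divide_inverse mult_ac)
  qed simp
  ultimately show ?thesis by (rule Lim_transform_eventually)
qed

lemma Eq_deriv: "(Eq q has_real_derivative Eq (Esig q) s) (at s)"
proof (cases "s > 0")
  case True
  have d: "((\<lambda>s. poly q (1 / s) * exp (- (1 / s))) has_real_derivative
          (poly (pderiv q) (1/s) * (- 1 / s^2)) * exp (- (1/s)) + poly q (1/s) * (exp (- (1/s)) * (1 / s^2))) (at s)"
    using True
    by (auto intro!: derivative_eq_intros DERIV_chain2[OF poly_DERIV] simp: power2_eq_square field_simps)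
  have e: "(poly (pderiv q) (1/s) * (- 1 / s^2)) * exp (- (1/s)) + poly q (1/s) * (exp (- (1/s)) * (1 / s^2))
        = Eq (Esig q) s"
    using True by (simp add: Eq_def Esig_def) (simp add: power2_eq_square algebra_simps diff_divide_distrib add_divide_distrib)
  show ?thesis
    by (rule has_field_derivative_transform_within_open[OF d[unfolded e], of "{0<..}"]) (use True in \<open>auto simp: Eq_def\<close>)
next
  case False
  show ?thesis
  proof (cases "s < 0")
    case True
    have "(Eq q has_real_derivative 0) (at s)"
      by (rule has_field_derivative_transform_within_open[of "\<lambda>s. 0" 0 s "{..<0}"]) (use True in \<open>auto simp: Eq_def\<close>)
    then show ?thesis using True by (simp add: Eq_def)
  next
    case False
    with \<open>\<not> s > 0\<close> have s: "s = 0" by simp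
    have l: "((\<lambda>y. Eq q y / y) \<longlongrightarrow> 0) (at_left 0)"
    proof (rule Lim_transform_eventually[rotated])
      show "eventually (\<lambda>y. 0 = Eq q y / y) (at_left 0)"
        by (auto simp: Eq_def intro!: eventually_at_leftI[where a="-1"])
    qed simp
    have "((\<lambda>y. (Eq q y - Eq q 0) / (y - 0)) \<longlongrightarrow> 0) (at 0)"
      using l Eq_right_lim by (simp add: filterlim_at_split Eq_def)
    then show ?thesis unfolding s has_field_derivative_iff by (simp add: Eq_def)
  qed
qed

lemma sm_Eq: "smooth_fun f \<Longrightarrow> smooth_fun (\<lambda>x. Eq q (f x))"
  using sm_compose_family[where \<phi>=Eq and c="\<lambda>_. 1" and \<sigma>=Esig] Eq_deriv by simp


context complex_inner_space begin
end

lemma scaleC_zero_left[simp]: "(0::complex) *\<^sub>C (x::'a::complex_inner_space) = 0"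
  using scaleC_add_left[of 0 0 x] by simp

lemma scaleC_zero_right[simp]: "(c::complex) *\<^sub>C (0::'a::complex_inner_space) = 0"
  using scaleC_add_right[of c 0 0] by simp

lemma scaleC_minus_right: "(c::complex) *\<^sub>C (- x::'a::complex_inner_space) = - (c *\<^sub>C x)"
  using scaleC_add_right[of c x "-x"] by (simp add: eq_neg_iff_add_eq_0 add.commute)

lemma scaleC_diff_right: "(c::complex) *\<^sub>C (x - y::'a::complex_inner_space) = c *\<^sub>C x - c *\<^sub>C y"
  using scaleC_add_right[of c x "-y"] by (simp add: scaleC_minus_right)

lemma scaleC_sum_right: "(c::complex) *\<^sub>C (\<Sum>i\<in>A. f i) = (\<Sum>i\<in>A. c *\<^sub>C (f i::'a::complex_inner_space))"
  by (induction A rule: infinite_finite_induct) (auto simp: scaleC_add_right)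

lemma scaleC_minus_left: "(- c::complex) *\<^sub>C (x::'a::complex_inner_space) = - (c *\<^sub>C x)"
  using scaleC_add_left[of c "-c" x] by (simp add: eq_neg_iff_add_eq_0 add.commute)

lemma cinner_add_right: "cinner (x::'a::complex_inner_space) (y + z) = cinner x y + cinner x z"
  by (metis cinner_add_left cinner_commute complex_cnj_add)

lemma cinner_scaleC_right: "cinner (x::'a::complex_inner_space) (c *\<^sub>C y) = c * cinner x y"
  by (metis cinner_commute cinner_scaleC_left complex_cnj_cnj complex_cnj_mult)

lemma cinner_zero_left[simp]: "cinner (0::'a::complex_inner_space) y = 0"
  using cinner_add_left[of 0 0 y] by simp

lemma cinner_zero_right[simp]: "cinner (x::'a::complex_inner_space) 0 = 0"
  using cinner_add_right[of x 0 0] by simp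

lemma cinner_minus_left: "cinner (- x::'a::complex_inner_space) y = - cinner x y"
  using cinner_add_left[of x "-x" y] by (simp add: eq_neg_iff_add_eq_0 add.commute)

lemma cinner_minus_right: "cinner (x::'a::complex_inner_space) (- y) = - cinner x y"
  using cinner_add_right[of x y "-y"] by (simp add: eq_neg_iff_add_eq_0 add.commute)

lemma cinner_diff_left: "cinner (x - y::'a::complex_inner_space) z = cinner x z - cinner y z"
  using cinner_add_left[of x "-y" z] by (simp add: cinner_minus_left)

lemma cinner_diff_right: "cinner (x::'a::complex_inner_space) (y - z) = cinner x y - cinner x z"
  using cinner_add_right[of x y "-z"] by (simp add: cinner_minus_right)

lemma cinner_sum_right: "cinner (x::'a::complex_inner_space) (\<Sum>i\<in>A. f i) = (\<Sum>i\<in>A. cinner x (f i))"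
  by (induction A rule: infinite_finite_induct) (auto simp: cinner_add_right)

lemma cinner_sum_left: "cinner (\<Sum>i\<in>A. f i) (x::'a::complex_inner_space) = (\<Sum>i\<in>A. cinner (f i) x)"
  by (induction A rule: infinite_finite_induct) (auto simp: cinner_add_left)

lemma cinner_scaleR_left: "cinner (r *\<^sub>R x::'a::complex_inner_space) y = of_real r * cinner x y"
  by (simp add: scaleR_scaleC cinner_scaleC_left)

lemma cinner_scaleR_right: "cinner (x::'a::complex_inner_space) (r *\<^sub>R y) = of_real r * cinner x y"
  by (simp add: scaleR_scaleC cinner_scaleC_right)

lemma cinner_self: "cinner (x::'a::complex_inner_space) x = of_real ((norm x)\<^sup>2)"
proof -
  have "cinner x x = cnj (cinner x x)" by (rule cinner_commute)
  then have "Im (cinner x x) = 0" by (metis cnj.simps(2) neg_equal_zero)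
  moreover have "Re (cinner x x) = (norm x)\<^sup>2" by (simp add: power2_norm_eq_inner inner_cinner)
  ultimately show ?thesis by (simp add: complex_eq_iff)
qed

lemma norm_scaleC: "norm (c *\<^sub>C (x::'a::complex_inner_space)) = cmod c * norm x"
proof -
  have "complex_of_real ((norm (c *\<^sub>C x))\<^sup>2) = cinner (c *\<^sub>C x) (c *\<^sub>C x)" by (simp add: cinner_self)
  also have "\<dots> = cnj c * c * cinner x x" by (simp add: cinner_scaleC_left cinner_scaleC_right)
  also have "\<dots> = complex_of_real ((cmod c * norm x)\<^sup>2)"
  proof -
    have h: "cnj c * c = complex_of_real ((cmod c)^2)" by (metis complex_norm_square mult.commute)
    show ?thesis using h by (simp add: cinner_self power_mult_distrib)
  qed
  finally have "(norm (c *\<^sub>C x))\<^sup>2 = (cmod c * norm x)\<^sup>2" using of_real_eq_iff by blast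
  then show ?thesis by (simp add: power2_eq_iff_nonneg)
qed

lemma cinner_cauchy_schwarz: "cmod (cinner (x::'a::complex_inner_space) y) \<le> norm x * norm y"
proof (cases "cinner x y = 0")
  case True then show ?thesis by simp
next
  case False
  define z where "z = cinner x y"
  define c where "c = z / complex_of_real (cmod z)"
  have cm: "cmod c = 1" using False by (simp add: c_def z_def norm_divide)
  have "cnj c * z = complex_of_real (cmod z)"
    using False unfolding c_def
    by (simp add: complex_norm_square[symmetric] field_simps z_def power2_eq_square)
  then have "cmod z = Re (cinner (c *\<^sub>C x) y)"
    by (simp add: cinner_scaleC_left z_def)
  also have "\<dots> = inner (c *\<^sub>C x) y" by (simp add: inner_cinner)
  also have "\<dots> \<le> norm (c *\<^sub>C x) * norm y" by (rule norm_cauchy_schwarz)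
  also have "\<dots> = norm x * norm y" by (simp add: norm_scaleC cm)
  finally show ?thesis by (simp add: z_def)
qed

lemma bounded_bilinear_cinner: "bounded_bilinear (cinner :: 'a::complex_inner_space \<Rightarrow> 'a \<Rightarrow> complex)"
proof
  show "\<exists>K. \<forall>a b::'a. norm (cinner a b) \<le> norm a * norm b * K"
    by (rule exI[of _ 1]) (simp add: cinner_cauchy_schwarz)
qed (auto simp: cinner_add_left cinner_add_right cinner_scaleR_left cinner_scaleR_right scaleR_conv_of_real)

lemma bounded_bilinear_scaleC: "bounded_bilinear (scaleC :: complex \<Rightarrow> 'a::complex_inner_space \<Rightarrow> 'a)"
proof
  show "\<exists>K. \<forall>a (b::'a). norm (a *\<^sub>C b) \<le> norm a * norm b * K"
    by (rule exI[of _ 1]) (simp add: norm_scaleC)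
qed (auto simp: scaleC_add_left scaleC_add_right scaleR_scaleC scaleC_scaleC scaleR_conv_of_real mult.commute)

lemma cinner_eq_zero_iff: "cinner (x::'a::complex_inner_space) x = 0 \<longleftrightarrow> x = 0"
  by (simp add: cinner_self)


function gs :: "(nat \<Rightarrow> 'a::complex_inner_space) \<Rightarrow> nat \<Rightarrow> 'a" where
  "gs v b = (let u = v b - (\<Sum>a\<in>{1..<b}. cinner (gs v a) (v b) *\<^sub>C gs v a) in (1 / norm u) *\<^sub>R u)"
  by auto
termination by (relation "Wellfounded.measure snd") auto

declare gs.simps[simp del]

definition gsu :: "(nat \<Rightarrow> 'a::complex_inner_space) \<Rightarrow> nat \<Rightarrow> 'a" where
  "gsu v b = v b - (\<Sum>a\<in>{1..<b}. cinner (gs v a) (v b) *\<^sub>C gs v a)"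

lemma gs_gsu: "gs v b = (1 / norm (gsu v b)) *\<^sub>R gsu v b"
  by (subst gs.simps) (simp add: gsu_def Let_def)

lemma norm_gs: "gsu v b \<noteq> 0 \<Longrightarrow> norm (gs v b) = 1"
  by (simp add: gs_gsu)

lemma cinner_norm1: "norm x = 1 \<Longrightarrow> cinner x x = 1"
  by (simp add: cinner_self)

lemma gs_orthonormal:
  "(\<forall>b\<in>{1..n}. gsu v b \<noteq> 0) \<Longrightarrow> a \<in> {1..n} \<Longrightarrow> b \<in> {1..n} \<Longrightarrow>
     cinner (gs v a) (gs v b) = (if a = b then 1 else 0)"
proof (induction n arbitrary: a b)
  case 0 then show ?case by simp
next
  case (Suc n)
  have IH: "cinner (gs v a) (gs v b) = (if a = b then 1 else 0)" if "a \<in> {1..n}" "b \<in> {1..n}" for a b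
    using Suc that by auto
  have key: "cinner (gs v a) (gs v (Suc n)) = 0" if a: "a \<in> {1..n}" for a
  proof -
    have "cinner (gs v a) (gsu v (Suc n)) =
        cinner (gs v a) (v (Suc n)) - (\<Sum>c\<in>{1..<Suc n}. cinner (gs v c) (v (Suc n)) * cinner (gs v a) (gs v c))"
      by (simp only: gsu_def cinner_diff_right cinner_sum_right cinner_scaleC_right)
    also have "(\<Sum>c\<in>{1..<Suc n}. cinner (gs v c) (v (Suc n)) * cinner (gs v a) (gs v c))
        = (\<Sum>c\<in>{1..<Suc n}. if c = a then cinner (gs v a) (v (Suc n)) else 0)"
      by (rule sum.cong) (use a IH in auto)
    also have "\<dots> = cinner (gs v a) (v (Suc n))" using a by (simp add: sum.delta)
    finally have "cinner (gs v a) (gsu v (Suc n)) = 0" by simp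
    then show ?thesis by (simp add: gs_gsu[of v "Suc n"] cinner_scaleR_right)
  qed
  have self: "cinner (gs v (Suc n)) (gs v (Suc n)) = 1"
    using Suc.prems(1) by (intro cinner_norm1 norm_gs) auto
  show ?case
  proof (cases "a = Suc n")
    case True
    show ?thesis
    proof (cases "b = Suc n")
      case False
      then have "b \<in> {1..n}" using Suc.prems by auto
      then show ?thesis using key True False by (metis cinner_commute complex_cnj_zero)
    qed (use True self in simp)
  next
    case False
    then have a: "a \<in> {1..n}" using Suc.prems by auto
    show ?thesis
    proof (cases "b = Suc n")
      case True then show ?thesis using key a False by simp
    next
      case False
      then have "b \<in> {1..n}" using Suc.prems by auto
      then show ?thesis using IH a by simp
    qed
  qed
qed

lemma gs_fixed:
  assumes add: "\<And>x y. T (x + y) = T x + T y" and sc: "\<And>c x. T (c *\<^sub>C x) = c *\<^sub>C T x"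
    and fx: "\<And>c. c \<le> b \<Longrightarrow> T (v c) = v c"
  shows "T (gs v b) = gs v b"
  using fx
proof (induction b rule: less_induct)
  case (less b)
  have lin: "linear T"
    by (rule linearI) (auto simp: add scaleR_scaleC sc)
  have "T (gsu v b) = gsu v b"
    using less by (simp add: gsu_def linear_diff[OF lin] linear_sum[OF lin] sc)
  then show ?case by (simp add: gs_gsu linear_scale[OF lin])
qed

lemma gs_transport:
  assumes add: "\<And>x y. T (x + y) = T x + T y" and sc: "\<And>c x. T (c *\<^sub>C x) = g c *\<^sub>C T x"
    and ci: "\<And>x y. cinner (T x) (T y) = g (cinner x y)"
    and greal: "\<And>r. g (complex_of_real r) = complex_of_real r"
  shows "gs (\<lambda>c. T (v c)) b = T (gs v b)"
proof (induction b rule: less_induct)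
  case (less b)
  have lin: "linear T"
    by (rule linearI) (auto simp: add scaleR_scaleC sc greal)
  have nT: "norm (T x) = norm x" for x
  proof -
    have "(norm (T x))\<^sup>2 = (norm x)\<^sup>2"
      using ci[of x x] unfolding cinner_self greal of_real_eq_iff .
    then show ?thesis by (simp add: power2_eq_iff_nonneg)
  qed
  have "gsu (\<lambda>c. T (v c)) b = T (gsu v b)"
    using less by (simp add: gsu_def linear_diff[OF lin] linear_sum[OF lin] sc ci)
  then show ?case by (simp add: gs_gsu linear_scale[OF lin] nT)
qed

lemma gs_scale:
  assumes c: "0 < c"
  shows "gs (\<lambda>b. c *\<^sub>R v b) b = gs v b \<and> gsu (\<lambda>b. c *\<^sub>R v b) b = c *\<^sub>R gsu v b"
proof (induction b rule: less_induct)
  case (less b)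
  have "gsu (\<lambda>b. c *\<^sub>R v b) b = c *\<^sub>R gsu v b"
    using less by (simp add: gsu_def cinner_scaleR_right scaleR_diff_right scaleR_sum_right scaleR_scaleC scaleC_scaleC cinner_scaleC_right scaleC_diff_right scaleC_sum_right)
  moreover then have "gs (\<lambda>b. c *\<^sub>R v b) b = gs v b"
    using c by (simp add: gs_gsu)
  ultimately show ?case by simp
qed


lemma sum8: "(\<Sum>a\<in>{1..<b}. (8::real)^a) \<le> 8^b / 7"
proof (induction b)
  case 0 then show ?case by simp
next
  case (Suc b)
  show ?case
  proof (cases "b = 0")
    case True then show ?thesis by simp
  next
    case False
    then have "(\<Sum>a\<in>{1..<Suc b}. (8::real)^a) = (\<Sum>a\<in>{1..<b}. 8^a) + 8^b"
      by (simp add: sum.atLeastLessThan_Suc)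
    then show ?thesis using Suc by simp
  qed
qed

lemma pow8: "real (8 * b) \<le> 8^b"
proof (induction b)
  case 0 then show ?case by simp
next
  case (Suc b)
  show ?case
  proof (cases "b = 0")
    case True then show ?thesis by simp
  next
    case False
    have h: "(8::real) \<le> 8^b" using False
      by (metis One_nat_def Suc_leI neq0_conv power_increasing power_one_right one_le_numeral)
    have "8 + 8 * real b \<le> 8 * 8^b" using Suc.IH h by simp
    then show ?thesis by simp
  qed
qed

lemma gs_estimate:
  fixes v e :: "nat \<Rightarrow> 'a::complex_inner_space"
  assumes on: "\<forall>a\<in>{1..n}. \<forall>b\<in>{1..n}. cinner (e a) (e b) = (if a = b then 1 else 0)"
    and cl: "\<forall>a\<in>{1..n}. norm (v a - e a) \<le> \<delta>"
    and d0: "0 \<le> \<delta>" and small: "8^n * \<delta> \<le> 1"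
  shows "b \<in> {1..n} \<Longrightarrow> gsu v b \<noteq> 0 \<and> norm (gs v b - e b) \<le> 8^b * \<delta>"
proof (induction b rule: less_induct)
  case (less b)
  have ne: "norm (e a) = 1" if "a \<in> {1..n}" for a
  proof -
    have c: "cinner (e a) (e a) = 1" using on that by simp
    have "complex_of_real ((norm (e a))\<^sup>2) = 1" using c by (simp only: cinner_self)
    then have "(norm (e a))\<^sup>2 = 1" by (metis of_real_eq_1_iff)
    then show ?thesis by (simp add: power2_eq_1_iff) (metis norm_ge_zero neg_0_le_iff_le le_numeral_extra(2) order_antisym zero_le_one)
  qed
  have "(1::real) \<le> 8^n" by simp
  then have d1: "\<delta> \<le> 1" using small d0 by (metis dual_order.trans mult_le_cancel_right1 not_le)
  have b: "b \<in> {1..n}" using less by simp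
  have nvb: "norm (v b) \<le> 2"
  proof -
    have "norm (v b) \<le> norm (v b - e b) + norm (e b)" by (metis add.commute norm_triangle_sub)
    moreover have "norm (v b - e b) \<le> \<delta>" using cl b by auto
    ultimately show ?thesis using ne[OF b] d1 by linarith
  qed
  have coef: "cmod (cinner (gs v a) (v b)) \<le> 2 * 8^a * \<delta> + \<delta>" if a: "a \<in> {1..<b}" for a
  proof -
    have an: "a \<in> {1..n}" using a b by auto
    have IH: "norm (gs v a - e a) \<le> 8^a * \<delta>" using less.IH[of a] a b by auto
    have eab: "cinner (e a) (e b) = 0" using on an b a by auto
    have "cinner (gs v a) (v b) = cinner (gs v a - e a) (v b) + cinner (e a) (v b - e b)"
      using eab by (simp add: cinner_diff_left cinner_diff_right)
    then have "cmod (cinner (gs v a) (v b)) \<le> cmod (cinner (gs v a - e a) (v b)) + cmod (cinner (e a) (v b - e b))"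
      by (simp add: norm_triangle_ineq)
    also have "\<dots> \<le> norm (gs v a - e a) * norm (v b) + norm (e a) * norm (v b - e b)"
      by (intro add_mono cinner_cauchy_schwarz)
    also have "\<dots> \<le> (8^a * \<delta>) * 2 + 1 * \<delta>"
      using IH nvb ne[OF an] cl b d0 by (intro add_mono mult_mono) auto
    finally show ?thesis by simp
  qed
  have ngs: "norm (gs v a) = 1" if a: "a \<in> {1..<b}" for a
    using less.IH[of a] a b by (auto intro: norm_gs)
  define u where "u = gsu v b"
  have "norm (u - e b) = norm ((v b - e b) - (\<Sum>a\<in>{1..<b}. cinner (gs v a) (v b) *\<^sub>C gs v a))"
    by (simp add: u_def gsu_def algebra_simps)
  also have "\<dots> \<le> norm (v b - e b) + norm (\<Sum>a\<in>{1..<b}. cinner (gs v a) (v b) *\<^sub>C gs v a)"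
    by (rule norm_triangle_ineq4)
  also have "\<dots> \<le> \<delta> + (\<Sum>a\<in>{1..<b}. 2 * 8^a * \<delta> + \<delta>)"
  proof (rule add_mono)
    show "norm (v b - e b) \<le> \<delta>" using cl b by auto
    have "norm (\<Sum>a\<in>{1..<b}. cinner (gs v a) (v b) *\<^sub>C gs v a) \<le> (\<Sum>a\<in>{1..<b}. norm (cinner (gs v a) (v b) *\<^sub>C gs v a))"
      by (rule norm_sum)
    also have "\<dots> \<le> (\<Sum>a\<in>{1..<b}. 2 * 8^a * \<delta> + \<delta>)"
      by (rule sum_mono) (simp add: norm_scaleC ngs coef)
    finally show "norm (\<Sum>a\<in>{1..<b}. cinner (gs v a) (v b) *\<^sub>C gs v a) \<le> (\<Sum>a\<in>{1..<b}. 2 * 8^a * \<delta> + \<delta>)" .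
  qed
  also have "\<dots> = \<delta> * b + 2 * \<delta> * (\<Sum>a\<in>{1..<b}. 8^a)"
    using b by (simp add: sum.distrib sum_distrib_left algebra_simps of_nat_diff)
  also have "\<dots> \<le> \<delta> * b + 2 * \<delta> * (8^b / 7)"
    using sum8[of b] d0 by (intro add_left_mono mult_left_mono) auto
  also have "\<dots> \<le> 8^b * \<delta> / 2"
  proof -
    have "real (8 * b) \<le> 8^b" by (rule pow8)
    then have h1: "\<delta> * real (8 * b) \<le> \<delta> * 8^b" using d0 by (intro mult_left_mono) auto
    have h2: "0 \<le> \<delta> * real b" using d0 by simp
    have e1: "\<delta> * real (8 * b) = 8 * (\<delta> * real b)" by simp
    have e2: "\<delta> * real b + 2 * \<delta> * (8 ^ b / 7) = \<delta> * real b + (2/7) * (\<delta> * 8^b)" by simp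
    have e3: "8 ^ b * \<delta> / 2 = (1/2) * (\<delta> * 8^b)" by simp
    show ?thesis unfolding e2 e3 using h1 h2 unfolding e1 by linarith
  qed
  finally have eta: "norm (u - e b) \<le> 8^b * \<delta> / 2" .
  have "(8::real)^b \<le> 8^n" using b by (intro power_increasing) auto
  then have "8^b * \<delta> \<le> 1" using small d0 by (meson dual_order.trans mult_right_mono)
  then have eta1: "norm (u - e b) \<le> 1/2" using eta by simp
  have u0: "u \<noteq> 0"
  proof
    assume "u = 0"
    then show False using eta1 ne[OF b] by simp
  qed
  have "norm (gs v b - e b) = norm (((1 / norm u) *\<^sub>R u - u) + (u - e b))"
    by (simp add: gs_gsu u_def)
  also have "\<dots> \<le> norm ((1 / norm u) *\<^sub>R u - u) + norm (u - e b)" by (rule norm_triangle_ineq)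
  also have "norm ((1 / norm u) *\<^sub>R u - u) = \<bar>1 - norm u\<bar>"
  proof -
    have "(1 / norm u) *\<^sub>R u - u = (1 / norm u - 1) *\<^sub>R u" by (simp add: algebra_simps)
    then have "norm ((1 / norm u) *\<^sub>R u - u) = \<bar>1 / norm u - 1\<bar> * norm u" by simp
    also have "\<dots> = \<bar>1 - norm u\<bar>" using u0 by (simp add: abs_mult_pos[symmetric] field_simps)
    finally show ?thesis .
  qed
  also have "\<bar>1 - norm u\<bar> \<le> norm (u - e b)"
    using norm_triangle_ineq3[of u "e b"] ne[OF b] by (simp add: abs_minus_commute)
  finally have "norm (gs v b - e b) \<le> 2 * norm (u - e b)" by simp
  also have "\<dots> \<le> 8^b * \<delta>" using eta by simp
  finally show ?case using u0 u_def by simp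
qed


lemma onb_spans:
  fixes w :: "nat \<Rightarrow> 'a::complex_inner_space"
  assumes dim: "has_cdim V m"
    and inV: "\<forall>a\<in>{1..m}. w a \<in> V"
    and on: "\<forall>a\<in>{1..m}. \<forall>b\<in>{1..m}. cinner (w a) (w b) = (if a = b then 1 else 0)"
  shows "cspan (w ` {1..m}) = V"
proof -
  interpret cv: vector_space "scaleC :: complex \<Rightarrow> 'a \<Rightarrow> 'a"
    by unfold_locales (auto simp: scaleC_add_right scaleC_add_left scaleC_scaleC scaleC_one)
  have span_eq: "cspan S = cv.span S" for S
    unfolding cspan_def cv.span_explicit by auto
  have dep_eq: "cdependent S = cv.dependent S" for S
    unfolding cdependent_def cv.dependent_explicit by blast
  obtain B where B: "finite B" "card B = m" "\<not> cv.dependent B" "cv.span B = V"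
    using dim unfolding has_cdim_def span_eq dep_eq by blast
  have dimV: "cv.dim V = m"
    using B cv.span_superset by (intro cv.dim_unique[of B]) auto
  define W where "W = w ` {1..m}"
  have inj: "inj_on w {1..m}"
  proof (rule inj_onI)
    fix a b assume ab: "a \<in> {1..m}" "b \<in> {1..m}" "w a = w b"
    then have "cinner (w a) (w b) = 1" using on by (metis (full_types))
    then show "a = b" using on ab by (metis zero_neq_one)
  qed
  have cardW: "card W = m" unfolding W_def using card_image[OF inj] by simp
  have onW: "cinner x y = (if x = y then 1 else 0)" if "x \<in> W" "y \<in> W" for x y
    using that on unfolding W_def by auto
  have indep: "\<not> cv.dependent W"
  proof
    assume "cv.dependent W"
    then obtain t u v where t: "finite t" "t \<subseteq> W" "(\<Sum>x\<in>t. u x *\<^sub>C x) = 0" "v \<in> t" "u v \<noteq> 0"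
      unfolding cv.dependent_explicit by blast
    have "0 = cinner v (\<Sum>x\<in>t. u x *\<^sub>C x)" using t by simp
    also have "\<dots> = (\<Sum>x\<in>t. u x * cinner v x)" by (simp add: cinner_sum_right cinner_scaleC_right)
    also have "\<dots> = (\<Sum>x\<in>t. if x = v then u v else 0)"
    proof (rule sum.cong)
      fix x assume x: "x \<in> t"
      then have "cinner v x = (if v = x then 1 else 0)" using t onW[of v x] by blast
      then show "u x * cinner v x = (if x = v then u v else 0)" by auto
    qed simp
    also have "\<dots> = u v" using t by (simp add: sum.delta')
    finally show False using t by simp
  qed
  have WV: "W \<subseteq> V" using inV unfolding W_def by auto
  have "V \<subseteq> cv.span W"
  proof
    fix x assume xV: "x \<in> V"
    show "x \<in> cv.span W"
    proof (rule ccontr)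
      assume nx: "x \<notin> cv.span W"
      have i2: "\<not> cv.dependent (insert x W)" by (rule cv.independent_insertI[OF nx indep])
      have "insert x W \<subseteq> cv.span B" using xV WV B(4) by auto
      from cv.independent_span_bound[OF B(1) i2 this]
      have "card (insert x W) \<le> m" using B(2) by simp
      moreover have "x \<notin> W" using nx cv.span_superset by blast
      moreover have "finite W" unfolding W_def by simp
      ultimately show False using cardW by simp
    qed
  qed
  moreover have "cv.span W \<subseteq> V" using WV B(4) by (metis cv.span_minimal cv.subspace_span)
  ultimately show ?thesis unfolding span_eq W_def by auto
qed


lemma sm_local:
  fixes f :: "'a::euclidean_space \<Rightarrow> 'b::real_normed_vector"
  assumes "\<And>k0. \<exists>U g. open U \<and> k0 \<in> U \<and> smooth_fun g \<and> (\<forall>k\<in>U. f k = g k)"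
  shows "smooth_fun f"
proof (rule sm_coinduct[where X="\<lambda>f. \<forall>k0. \<exists>U g. open U \<and> k0 \<in> U \<and> smooth_fun g \<and> (\<forall>k\<in>U. f k = g k)"])
  show "\<forall>k0. \<exists>U g. open U \<and> k0 \<in> U \<and> smooth_fun g \<and> (\<forall>k\<in>U. f k = g k)" using assms by blast
next
  fix h :: "'a \<Rightarrow> 'b" and x
  assume "\<forall>k0. \<exists>U g. open U \<and> k0 \<in> U \<and> smooth_fun g \<and> (\<forall>k\<in>U. h k = g k)"
  then obtain U g where U: "open U" "x \<in> U" "smooth_fun g" "\<forall>k\<in>U. h k = g k" by blast
  have "(g has_derivative frechet_derivative g (at x)) (at x)" by (rule smooth_has_derivative[OF U(3)])
  then have "(h has_derivative frechet_derivative g (at x)) (at x)"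
    by (rule has_derivative_transform_within_open[OF _ U(1,2)]) (use U(4) in auto)
  then show "h differentiable (at x)" by (auto simp: differentiable_def)
next
  fix h :: "'a \<Rightarrow> 'b" and i :: 'a
  assume H: "\<forall>k0. \<exists>U g. open U \<and> k0 \<in> U \<and> smooth_fun g \<and> (\<forall>k\<in>U. h k = g k)" and i: "i \<in> Basis"
  show "\<forall>k0. \<exists>U g. open U \<and> k0 \<in> U \<and> smooth_fun g \<and> (\<forall>k\<in>U. pd h i k = g k)"
  proof
    fix k0
    obtain U g where U: "open U" "k0 \<in> U" "smooth_fun g" "\<forall>k\<in>U. h k = g k" using H by blast
    have "pd h i k = pd g i k" if k: "k \<in> U" for k
    proof -
      have "(g has_derivative frechet_derivative g (at k)) (at k)" by (rule smooth_has_derivative[OF U(3)])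
      then have "(h has_derivative frechet_derivative g (at k)) (at k)"
        by (rule has_derivative_transform_within_open[OF _ U(1) k]) (use U(4) in auto)
      then have "h differentiable (at k)" by (auto simp: differentiable_def)
      then have "frechet_derivative h (at k) = frechet_derivative g (at k)"
        by (rule frechet_derivative_transform_within_open[OF _ U(1) k]) (use U(4) in auto)
      then show ?thesis by (simp add: pd_def)
    qed
    then show "\<exists>U g. open U \<and> k0 \<in> U \<and> smooth_fun g \<and> (\<forall>k\<in>U. pd h i k = g k)"
      using U sm_pd[OF U(3) i] by blast
  qed
qed

lemma sm_prod: "finite J \<Longrightarrow> (\<And>j. j \<in> J \<Longrightarrow> smooth_fun (F j)) \<Longrightarrow> smooth_fun (\<lambda>x. \<Prod>j\<in>J. (F j x :: real))"
proof (induction J rule: finite_induct)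
  case empty then show ?case by (simp add: sm_const)
next
  case (insert a J) then show ?case by (simp add: sm_mult)
qed

lemma finite_common_radius:
  assumes "finite A" and "\<forall>a\<in>A. \<exists>r>0. Q a r"
    and mono: "\<And>a r r'. Q a r \<Longrightarrow> 0 < r' \<Longrightarrow> r' \<le> r \<Longrightarrow> Q a r'"
  shows "\<exists>r>0. \<forall>a\<in>A. Q a (r::real)"
  using assms(1,2)
proof (induction A rule: finite_induct)
  case empty then show ?case by (auto intro: exI[of _ 1])
next
  case (insert a A)
  then obtain r1 where r1: "r1 > 0" "\<forall>b\<in>A. Q b r1" by auto
  obtain r2 where r2: "r2 > 0" "Q a r2" using insert by auto
  show ?case
    by (rule exI[of _ "min r1 r2"]) (use r1 r2 mono in auto)
qed

definition eta :: "real \<Rightarrow> real" where "eta t = Eq 1 (1 - t\<^sup>2)"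

lemma eta_nonneg: "0 \<le> eta t" by (simp add: eta_def Eq_def)

lemma eta_nz: "eta t \<noteq> 0 \<longleftrightarrow> \<bar>t\<bar> < 1"
  by (simp add: eta_def Eq_def abs_square_less_1)

lemma eta_even: "eta (- t) = eta t" by (simp add: eta_def)

lemma sm_eta: "smooth_fun f \<Longrightarrow> smooth_fun (\<lambda>x. eta (f x))"
  unfolding eta_def by (intro sm_Eq sm_diff' sm_const) (simp add: power2_eq_square sm_mult)

lemma finite_int_box: "finite {n :: 'd::finite \<Rightarrow> int. \<forall>i. n i \<in> {a i..b i}}"
proof -
  have "{n :: 'd \<Rightarrow> int. \<forall>i. n i \<in> {a i..b i}} = Pi\<^sub>E UNIV (\<lambda>i. {a i..b i})"
    by (auto simp: PiE_UNIV_domain)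
  then show ?thesis by (simp add: finite_PiE)
qed


lemma clinear_linear: "clinear T \<Longrightarrow> linear T"
  unfolding clinear_def by (intro linearI) (auto simp: scaleR_scaleC)

lemma antilinear_linear: "antilinear T \<Longrightarrow> linear T"
  unfolding antilinear_def by (intro linearI) (auto simp: scaleR_scaleC)

locale constr =
  fixes P :: "real^'d \<Rightarrow> ('h::complex_inner_space \<Rightarrow>\<^sub>L 'h)"
    and L :: "(real^'d) set"
    and tau :: "real^'d \<Rightarrow> 'h \<Rightarrow> 'h"
    and Theta :: "'h \<Rightarrow> 'h"
    and m :: nat
    and Phi :: "nat \<Rightarrow> real^'d \<Rightarrow> 'h"
    and B :: "real^'d^'d" and Ai :: "real^'d^'d"
    and N :: nat and \<delta> r :: real
  assumes proj: "\<forall>k. orth_projector (P k) \<and> has_cdim (range (blinfun_apply (P k))) m"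
    and P1: "smooth_fun P"
    and P2: "unitary_rep L tau"
    and P2': "\<forall>k. \<forall>l\<in>L. \<forall>x. P (k + l) x = tau l (P k (inv (tau l) x))"
    and P3: "antiunitary_op Theta"
    and P3': "\<forall>k x. P (- k) x = Theta (P k (inv Theta x))"
    and onb: "\<forall>k. is_onb_frame P m Phi k"
    and equiv: "\<forall>a\<in>{1..m}. \<forall>k. \<forall>l\<in>L. Phi a (k + l) = tau l (Phi a k)"
    and trs: "\<forall>a\<in>{1..m}. \<forall>k. Phi a (- k) = Theta (Phi a k)"
    and BAi: "B ** Ai = mat 1" "Ai ** B = mat 1"
    and Ldef: "L = range (\<lambda>n::'d\<Rightarrow>int. B *v (\<chi> i. real_of_int (n i)))"
    and Npos: "N \<ge> 1" and dpos: "0 < \<delta>" and dsmall: "8^m * \<delta> \<le> 1"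
    and uc: "\<forall>a\<in>{1..m}. \<forall>k q. dist k q < r \<longrightarrow> norm (Phi a k - Phi a q) \<le> \<delta>"
    and grid: "\<forall>v. (\<forall>i. \<bar>v$i\<bar> < 1 / real N) \<longrightarrow> norm (B *v v) < r"
begin

lemma P_add: "P k (x + y) = P k x + P k y"
  by (rule blinfun.add_right)

lemma P_clinear: "clinear (blinfun_apply (P k))"
  using proj unfolding orth_projector_def by blast

lemma P_scaleC: "P k (c *\<^sub>C x) = c *\<^sub>C P k x"
  using P_clinear unfolding clinear_def by blast

lemma P_idem: "P k (P k x) = P k x"
  using proj unfolding orth_projector_def by blast

lemma P_sa: "cinner (P k x) y = cinner x (P k y)"
  using proj unfolding orth_projector_def by blast

lemma P_norm: "norm (P k x) \<le> norm x"
proof -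
  have "complex_of_real ((norm (P k x))\<^sup>2) = cinner (P k x) (P k x)" by (simp add: cinner_self)
  also have "\<dots> = cinner x (P k x)" by (simp add: P_sa P_idem)
  finally have e: "complex_of_real ((norm (P k x))\<^sup>2) = cinner x (P k x)" .
  have "(norm (P k x))\<^sup>2 = cmod (complex_of_real ((norm (P k x))\<^sup>2))" by (simp only: norm_of_real) simp
  also have "\<dots> \<le> norm x * norm (P k x)" unfolding e by (rule cinner_cauchy_schwarz)
  finally have "norm (P k x) * norm (P k x) \<le> norm x * norm (P k x)" by (simp add: power2_eq_square)
  then have "0 < norm (P k x) \<longrightarrow> norm (P k x) \<le> norm x" by (simp add: mult_le_cancel_right)
  then show ?thesis using norm_ge_zero[of x] by (cases "norm (P k x) = 0") auto
qed

lemma P_range: "y \<in> range (blinfun_apply (P k)) \<Longrightarrow> P k y = y"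
  using P_idem by auto

lemma Phi_range: "a \<in> {1..m} \<Longrightarrow> P k (Phi a k) = Phi a k"
proof -
  assume a: "a \<in> {1..m}"
  have "Phi a k \<in> cspan ((\<lambda>a. Phi a k) ` {1..m})"
    unfolding cspan_def using a
    by (intro CollectI exI[of _ "{Phi a k}"] exI[of _ "\<lambda>_. 1"]) (auto simp: scaleC_one)
  then show ?thesis using onb unfolding is_onb_frame_def by (auto intro: P_range)
qed

lemma Phi_norm: "a \<in> {1..m} \<Longrightarrow> norm (Phi a k) = 1"
proof -
  assume a: "a \<in> {1..m}"
  have c: "cinner (Phi a k) (Phi a k) = 1" using onb a unfolding is_onb_frame_def by auto
  have "complex_of_real ((norm (Phi a k))\<^sup>2) = 1" using c by (simp only: cinner_self)
  then have "(norm (Phi a k))\<^sup>2 = 1" by (metis of_real_eq_1_iff)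
  then show ?thesis using power2_eq_iff_nonneg[of "norm (Phi a k)" 1] by simp
qed

lemma tau_unitary: "l \<in> L \<Longrightarrow> unitary_op (tau l)"
  using P2 unfolding unitary_rep_def by blast

lemma tau_add: "l \<in> L \<Longrightarrow> tau l (x + y) = tau l x + tau l y"
  using tau_unitary unfolding unitary_op_def clinear_def by blast

lemma tau_scaleC: "l \<in> L \<Longrightarrow> tau l (c *\<^sub>C x) = c *\<^sub>C tau l x"
  using tau_unitary unfolding unitary_op_def clinear_def by blast

lemma tau_cinner: "l \<in> L \<Longrightarrow> cinner (tau l x) (tau l y) = cinner x y"
  using tau_unitary unfolding unitary_op_def by blast

lemma tau_linear: "l \<in> L \<Longrightarrow> linear (tau l)"
  using tau_unitary unfolding unitary_op_def by (auto intro: clinear_linear)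

lemma tau_norm: "l \<in> L \<Longrightarrow> norm (tau l x) = norm x"
proof -
  assume l: "l \<in> L"
  have "(norm (tau l x))\<^sup>2 = (norm x)\<^sup>2"
    using tau_cinner[OF l, of x x] unfolding cinner_self of_real_eq_iff .
  then show ?thesis by (simp add: power2_eq_iff_nonneg)
qed

lemma tau_inj: "l \<in> L \<Longrightarrow> inj (tau l)"
proof (rule injI)
  fix x y assume l: "l \<in> L" and e: "tau l x = tau l y"
  have "tau l (x - y) = 0" using e linear_diff[OF tau_linear[OF l]] by simp
  then have "norm (x - y) = 0" using tau_norm[OF l, of "x - y"] by simp
  then show "x = y" by simp
qed

lemma P_shift: "l \<in> L \<Longrightarrow> P (k + l) (tau l x) = tau l (P k x)"
  using P2' tau_inj[of l] by (simp add: inv_f_f)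

lemma Theta_add: "Theta (x + y) = Theta x + Theta y"
  using P3 unfolding antiunitary_op_def antilinear_def by blast

lemma Theta_scaleC: "Theta (c *\<^sub>C x) = cnj c *\<^sub>C Theta x"
  using P3 unfolding antiunitary_op_def antilinear_def by blast

lemma Theta_cinner: "cinner (Theta x) (Theta y) = cnj (cinner x y)"
  using P3 cinner_commute unfolding antiunitary_op_def by metis

lemma Theta_linear: "linear Theta"
  using P3 unfolding antiunitary_op_def by (auto intro: antilinear_linear)

lemma Theta_norm: "norm (Theta x) = norm x"
proof -
  have "(norm (Theta x))\<^sup>2 = (norm x)\<^sup>2"
    using Theta_cinner[of x x] unfolding cinner_self complex_cnj_complex_of_real of_real_eq_iff .
  then show ?thesis by (simp add: power2_eq_iff_nonneg)
qed

lemma Theta_inj: "inj Theta"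
proof (rule injI)
  fix x y assume e: "Theta x = Theta y"
  have "Theta (x - y) = 0" using e linear_diff[OF Theta_linear] by simp
  then have "norm (x - y) = 0" using Theta_norm[of "x - y"] by simp
  then show "x = y" by simp
qed

lemma P_neg: "P (- k) (Theta x) = Theta (P k x)"
  using P3' Theta_inj by (simp add: inv_f_f)

end


context constr begin

definition xc :: "real^'d \<Rightarrow> real^'d" where "xc k = Ai *v k"
definition latv :: "('d \<Rightarrow> int) \<Rightarrow> real^'d" where "latv n = (\<chi> i. real_of_int (n i))"
definition gp :: "('d \<Rightarrow> int) \<Rightarrow> real^'d" where "gp n = (1 / real N) *\<^sub>R (B *v latv n)"
definition wt :: "real^'d \<Rightarrow> ('d \<Rightarrow> int) \<Rightarrow> real" where
  "wt k n = (\<Prod>i\<in>UNIV. eta (real N * xc k $ i - real_of_int (n i)))"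
definition Sk :: "real^'d \<Rightarrow> ('d \<Rightarrow> int) set" where "Sk k = {n. wt k n \<noteq> 0}"
definition Phit :: "nat \<Rightarrow> real^'d \<Rightarrow> 'h" where "Phit b k = (\<Sum>n\<in>Sk k. wt k n *\<^sub>R Phi b (gp n))"
definition Wt :: "real^'d \<Rightarrow> real" where "Wt k = (\<Sum>n\<in>Sk k. wt k n)"

lemma B_lin: "linear ((*v) B)" by (rule matrix_vector_mul_linear)

lemma xc_B: "xc (B *v v) = v"
  unfolding xc_def by (simp add: matrix_vector_mul_assoc BAi)

lemma B_xc: "B *v xc k = k"
  unfolding xc_def by (simp add: matrix_vector_mul_assoc BAi)

lemma xc_add: "xc (k + l) = xc k + xc l"
  unfolding xc_def by (simp add: matrix_vector_right_distrib)

lemma xc_neg: "xc (- k) = - xc k"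
  unfolding xc_def by (simp add: linear_neg[OF matrix_vector_mul_linear])

lemma wt_nonneg: "0 \<le> wt k n"
  unfolding wt_def by (intro prod_nonneg) (simp add: eta_nonneg)

lemma wt_nz: "wt k n \<noteq> 0 \<longleftrightarrow> (\<forall>i. \<bar>real N * xc k $ i - real_of_int (n i)\<bar> < 1)"
  unfolding wt_def by (simp add: eta_nz)

lemma Sk_sub: "Sk k \<subseteq> {n. \<forall>i. n i \<in> {\<lfloor>real N * xc k $ i\<rfloor> - 2 .. \<lfloor>real N * xc k $ i\<rfloor> + 2}}"
proof
  fix n assume "n \<in> Sk k"
  then have h: "\<bar>real N * xc k $ i - real_of_int (n i)\<bar> < 1" for i unfolding Sk_def using wt_nz by blast
  show "n \<in> {n. \<forall>i. n i \<in> {\<lfloor>real N * xc k $ i\<rfloor> - 2 .. \<lfloor>real N * xc k $ i\<rfloor> + 2}}"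
  proof (clarify)
    fix i
    define t where "t = real N * xc k $ i"
    have h1: "\<bar>t - real_of_int (n i)\<bar> < 1" using h[of i] by (simp add: t_def)
    have f1: "real_of_int \<lfloor>t\<rfloor> \<le> t" "t < real_of_int \<lfloor>t\<rfloor> + 1" by linarith+
    have h2: "t - 1 < real_of_int (n i)" "real_of_int (n i) < t + 1" using h1 by (auto simp only: abs_less_iff)
    have e1: "real_of_int (\<lfloor>t\<rfloor> - 2) = real_of_int \<lfloor>t\<rfloor> - 2" "real_of_int (\<lfloor>t\<rfloor> + 2) = real_of_int \<lfloor>t\<rfloor> + 2" by simp_all
    have "real_of_int (\<lfloor>t\<rfloor> - 2) < real_of_int (n i)" unfolding e1 using h2 f1 by linarith
    then have a: "\<lfloor>t\<rfloor> - 2 < n i" by (simp only: of_int_less_iff)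
    have "real_of_int (n i) < real_of_int (\<lfloor>t\<rfloor> + 2)" unfolding e1 using h2 f1 by linarith
    then have b: "n i < \<lfloor>t\<rfloor> + 2" by (simp only: of_int_less_iff)
    show "n i \<in> {\<lfloor>real N * xc k $ i\<rfloor> - 2 .. \<lfloor>real N * xc k $ i\<rfloor> + 2}" using a b by (simp add: t_def)
  qed
qed

lemma Sk_finite: "finite (Sk k)"
  by (rule finite_subset[OF Sk_sub finite_int_box])

lemma round_in_Sk: "(\<lambda>i. round (real N * xc k $ i)) \<in> Sk k"
proof -
  have "\<bar>real N * xc k $ i - real_of_int (round (real N * xc k $ i))\<bar> < 1" for i
    using of_int_round_abs_le[of "real N * xc k $ i"] by (simp add: abs_minus_commute)
  then show ?thesis unfolding Sk_def using wt_nz by blast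
qed

lemma Wt_pos: "0 < Wt k"
proof -
  have "0 < wt k (\<lambda>i. round (real N * xc k $ i))"
    using round_in_Sk[of k] wt_nonneg unfolding Sk_def by (simp add: order_le_neq_trans)
  also have "\<dots> \<le> Wt k" unfolding Wt_def
    by (rule member_le_sum) (use round_in_Sk Sk_finite wt_nonneg in auto)
  finally show ?thesis .
qed

lemma grid_dist: "n \<in> Sk k \<Longrightarrow> norm (k - gp n) < r"
proof -
  assume n: "n \<in> Sk k"
  define v where "v = xc k - (1 / real N) *\<^sub>R latv n"
  have "k - gp n = B *v v"
    unfolding v_def gp_def by (simp add: linear_diff[OF B_lin] linear_scale[OF B_lin] B_xc)
  moreover have "\<bar>v $ i\<bar> < 1 / real N" for i
  proof -
    have h: "\<bar>real N * xc k $ i - real_of_int (n i)\<bar> < 1" using n wt_nz unfolding Sk_def by blast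
    have Np: "0 < real N" using Npos by simp
    have e1: "v $ i = xc k $ i - real_of_int (n i) / real N" by (simp add: v_def latv_def)
    have e2: "(real N * xc k $ i - real_of_int (n i)) / real N = xc k $ i - real_of_int (n i) / real N"
      using Np by (simp add: diff_divide_distrib)
    have "\<bar>v $ i\<bar> = \<bar>real N * xc k $ i - real_of_int (n i)\<bar> / real N"
      unfolding e1 e2[symmetric] using Np by (simp add: abs_divide)
    also have "\<dots> < 1 / real N" by (rule divide_strict_right_mono[OF h Np])
    finally show ?thesis .
  qed
  ultimately show ?thesis using grid by auto
qed

lemma Phit_close:
  assumes a: "a \<in> {1..m}"
  shows "norm (Phit a k - Wt k *\<^sub>R Phi a k) \<le> Wt k * \<delta>"
proof -
  have "Phit a k - Wt k *\<^sub>R Phi a k = (\<Sum>n\<in>Sk k. wt k n *\<^sub>R (Phi a (gp n) - Phi a k))"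
    by (simp add: Phit_def Wt_def scaleR_sum_left scaleR_diff_right sum_subtractf)
  also have "norm \<dots> \<le> (\<Sum>n\<in>Sk k. norm (wt k n *\<^sub>R (Phi a (gp n) - Phi a k)))" by (rule norm_sum)
  also have "\<dots> \<le> (\<Sum>n\<in>Sk k. wt k n * \<delta>)"
  proof (rule sum_mono)
    fix n assume n: "n \<in> Sk k"
    have "dist (gp n) k < r" using grid_dist[OF n] by (simp add: dist_norm norm_minus_commute)
    then have "norm (Phi a (gp n) - Phi a k) \<le> \<delta>" using uc a by blast
    then show "norm (wt k n *\<^sub>R (Phi a (gp n) - Phi a k)) \<le> wt k n * \<delta>"
      using wt_nonneg[of k n] by (simp add: mult_left_mono)
  qed
  also have "\<dots> = Wt k * \<delta>" by (simp add: Wt_def sum_distrib_right)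
  finally show ?thesis .
qed

definition V :: "real^'d \<Rightarrow> nat \<Rightarrow> 'h" where "V k b = (if b \<in> {1..m} then P k (Phit b k) else 0)"

lemma V_close:
  assumes a: "a \<in> {1..m}"
  shows "norm ((1 / Wt k) *\<^sub>R V k a - Phi a k) \<le> \<delta>"
proof -
  have W: "0 < Wt k" by (rule Wt_pos)
  have "(1 / Wt k) *\<^sub>R V k a - Phi a k = P k ((1 / Wt k) *\<^sub>R Phit a k - Phi a k)"
    using a by (simp add: V_def blinfun.scaleR_right blinfun.diff_right Phi_range)
  then have "norm ((1 / Wt k) *\<^sub>R V k a - Phi a k) \<le> norm ((1 / Wt k) *\<^sub>R Phit a k - Phi a k)"
    using P_norm by simp
  also have "(1 / Wt k) *\<^sub>R Phit a k - Phi a k = (1 / Wt k) *\<^sub>R (Phit a k - Wt k *\<^sub>R Phi a k)"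
    using W by (simp add: scaleR_diff_right)
  also have "norm \<dots> = (1 / Wt k) * norm (Phit a k - Wt k *\<^sub>R Phi a k)" using W by simp
  also have "\<dots> \<le> (1 / Wt k) * (Wt k * \<delta>)" using Phit_close[OF a] W by (intro mult_left_mono) auto
  also have "\<dots> = \<delta>" using W by simp
  finally show ?thesis .
qed

end


context constr begin

lemma wt_shift: "wt (k + B *v latv m0) n = wt k (\<lambda>i. n i - int N * m0 i)"
proof -
  have "real N * xc (k + B *v latv m0) $ i - real_of_int (n i) = real N * xc k $ i - real_of_int (n i - int N * m0 i)" for i
    by (simp add: xc_add xc_B latv_def algebra_simps)
  then show ?thesis unfolding wt_def by (simp only:)
qed

lemma gp_shift: "gp (\<lambda>i. n i + int N * m0 i) = gp n + B *v latv m0"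
proof -
  have Np: "real N \<noteq> 0" using Npos by simp
  have "latv (\<lambda>i. n i + int N * m0 i) = latv n + real N *\<^sub>R latv m0"
    by (simp add: latv_def vec_eq_iff)
  then show ?thesis
    using Np by (simp add: gp_def linear_add[OF B_lin] linear_scale[OF B_lin] scaleR_add_right)
qed

lemma Phit_shift:
  assumes b: "b \<in> {1..m}" and l: "l \<in> L"
  shows "Phit b (k + l) = tau l (Phit b k)"
proof -
  obtain m0 where m0: "l = B *v latv m0" using l unfolding Ldef latv_def by auto
  define sh where "sh = (\<lambda>n::'d \<Rightarrow> int. (\<lambda>i. n i + int N * m0 i))"
  define ush where "ush = (\<lambda>n::'d \<Rightarrow> int. (\<lambda>i. n i - int N * m0 i))"
  have wsh: "wt (k + l) (sh n) = wt k n" for n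
    unfolding m0 wt_shift sh_def by simp
  have "Phit b (k + l) = (\<Sum>n\<in>Sk k. wt (k + l) (sh n) *\<^sub>R Phi b (gp (sh n)))"
    unfolding Phit_def
  proof (rule sum.reindex_bij_witness[of _ sh ush])
    show "\<And>a. a \<in> Sk k \<Longrightarrow> ush (sh a) = a" by (simp add: sh_def ush_def)
    show "\<And>a. a \<in> Sk k \<Longrightarrow> sh a \<in> Sk (k + l)" by (simp add: Sk_def wsh)
    show "\<And>a. a \<in> Sk (k + l) \<Longrightarrow> sh (ush a) = a" by (simp add: sh_def ush_def)
    show "\<And>a. a \<in> Sk (k + l) \<Longrightarrow> ush a \<in> Sk k"
      unfolding Sk_def by (simp add: m0 wt_shift ush_def)
  qed (simp add: sh_def ush_def)
  also have "\<dots> = (\<Sum>n\<in>Sk k. wt k n *\<^sub>R tau l (Phi b (gp n)))"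
  proof (rule sum.cong)
    fix n assume "n \<in> Sk k"
    have g: "gp (sh n) = gp n + l" unfolding sh_def gp_shift m0 ..
    have e: "Phi b (gp n + l) = tau l (Phi b (gp n))" using equiv b l by blast
    show "wt (k + l) (sh n) *\<^sub>R Phi b (gp (sh n)) = wt k n *\<^sub>R tau l (Phi b (gp n))"
      by (simp add: wsh g e)
  qed simp
  also have "\<dots> = tau l (Phit b k)"
    unfolding Phit_def by (simp add: linear_sum[OF tau_linear[OF l]] linear_scale[OF tau_linear[OF l]])
  finally show ?thesis .
qed

lemma wt_neg: "wt (- k) n = wt k (\<lambda>i. - n i)"
proof -
  have "eta (real N * xc (- k) $ i - real_of_int (n i)) = eta (real N * xc k $ i - real_of_int (- n i))" for i
  proof -
    have "real N * xc (- k) $ i - real_of_int (n i) = - (real N * xc k $ i - real_of_int (- n i))"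
      by (simp add: xc_neg)
    then show ?thesis by (simp only: eta_even)
  qed
  then show ?thesis unfolding wt_def by simp
qed

lemma gp_neg: "gp (\<lambda>i. - n i) = - gp n"
proof -
  have "latv (\<lambda>i. - n i) = - latv n" by (simp add: latv_def vec_eq_iff)
  then show ?thesis by (simp add: gp_def linear_neg[OF B_lin])
qed

lemma Phit_neg:
  assumes b: "b \<in> {1..m}"
  shows "Phit b (- k) = Theta (Phit b k)"
proof -
  define ng where "ng = (\<lambda>n::'d \<Rightarrow> int. (\<lambda>i. - n i))"
  have wng: "wt (- k) (ng n) = wt k n" for n
    unfolding wt_neg ng_def by simp
  have "Phit b (- k) = (\<Sum>n\<in>Sk k. wt (- k) (ng n) *\<^sub>R Phi b (gp (ng n)))"
    unfolding Phit_def
  proof (rule sum.reindex_bij_witness[of _ ng ng])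
    show "\<And>a. a \<in> Sk k \<Longrightarrow> ng (ng a) = a" by (simp add: ng_def)
    show "\<And>a. a \<in> Sk k \<Longrightarrow> ng a \<in> Sk (- k)" by (simp add: Sk_def wng)
    show "\<And>a. a \<in> Sk (- k) \<Longrightarrow> ng (ng a) = a" by (simp add: ng_def)
    show "\<And>a. a \<in> Sk (- k) \<Longrightarrow> ng a \<in> Sk k"
      unfolding Sk_def by (simp add: wt_neg ng_def)
  qed (simp add: ng_def)
  also have "\<dots> = (\<Sum>n\<in>Sk k. wt k n *\<^sub>R Theta (Phi b (gp n)))"
  proof (rule sum.cong)
    fix n assume "n \<in> Sk k"
    have g: "gp (ng n) = - gp n" unfolding ng_def gp_neg ..
    have e: "Phi b (- gp n) = Theta (Phi b (gp n))" using trs b by blast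
    show "wt (- k) (ng n) *\<^sub>R Phi b (gp (ng n)) = wt k n *\<^sub>R Theta (Phi b (gp n))"
      by (simp add: wng g e)
  qed simp
  also have "\<dots> = Theta (Phit b k)"
    unfolding Phit_def by (simp add: linear_sum[OF Theta_linear] linear_scale[OF Theta_linear])
  finally show ?thesis .
qed

lemma V_shift: "l \<in> L \<Longrightarrow> V (k + l) b = tau l (V k b)"
  by (simp add: V_def Phit_shift P_shift linear_0[OF tau_linear])

lemma V_neg: "V (- k) b = Theta (V k b)"
  by (simp add: V_def Phit_neg P_neg linear_0[OF Theta_linear])

definition Psi :: "nat \<Rightarrow> real^'d \<Rightarrow> 'h" where "Psi a k = gs (V k) a"

lemma Psi_shift: assumes l: "l \<in> L" shows "Psi a (k + l) = tau l (Psi a k)"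
proof -
  have "V (k + l) = (\<lambda>c. tau l (V k c))" by (rule ext) (rule V_shift[OF l])
  then show ?thesis unfolding Psi_def using l
  apply (simp only:) by (rule gs_transport[where g=id]) (auto simp: tau_add tau_scaleC tau_cinner)
qed

lemma Psi_neg: "Psi a (- k) = Theta (Psi a k)"
proof -
  have "V (- k) = (\<lambda>c. Theta (V k c))" by (rule ext) (rule V_neg)
  then show ?thesis unfolding Psi_def
  apply (simp only:) by (rule gs_transport[where g=cnj]) (auto simp: Theta_add Theta_scaleC Theta_cinner)
qed

end


context constr begin

lemma Psi_est:
  "(\<forall>b\<in>{1..m}. gsu (V k) b \<noteq> 0) \<and> (\<forall>b\<in>{1..m}. norm (Psi b k - Phi b k) \<le> 8^b * \<delta>)"
proof -
  define c where "c = 1 / Wt k"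
  have c: "0 < c" using Wt_pos by (simp add: c_def)
  have on: "\<forall>a\<in>{1..m}. \<forall>b\<in>{1..m}. cinner (Phi a k) (Phi b k) = (if a = b then 1 else 0)"
    using onb unfolding is_onb_frame_def by blast
  have cl: "\<forall>a\<in>{1..m}. norm ((\<lambda>b. c *\<^sub>R V k b) a - Phi a k) \<le> \<delta>"
    using V_close by (simp add: c_def)
  have E: "b \<in> {1..m} \<Longrightarrow> gsu (\<lambda>b. c *\<^sub>R V k b) b \<noteq> 0 \<and> norm (gs (\<lambda>b. c *\<^sub>R V k b) b - Phi b k) \<le> 8^b * \<delta>" for b
    by (rule gs_estimate[OF on cl less_imp_le[OF dpos] dsmall])
  show ?thesis
  proof (intro conjI ballI)
    fix b assume b: "b \<in> {1..m}"
    show "gsu (V k) b \<noteq> 0" using E[OF b] gs_scale[OF c, of "V k" b] c by auto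
    show "norm (Psi b k - Phi b k) \<le> 8^b * \<delta>" using E[OF b] gs_scale[OF c, of "V k" b] by (simp add: Psi_def)
  qed
qed

lemma V_fixed: "P k (V k c) = V k c"
  by (simp add: V_def P_idem)

lemma Psi_onb: "is_onb_frame P m Psi k"
proof -
  have nz: "\<forall>b\<in>{1..m}. gsu (V k) b \<noteq> 0" using Psi_est by blast
  have on: "\<forall>a\<in>{1..m}. \<forall>b\<in>{1..m}. cinner (Psi a k) (Psi b k) = (if a = b then 1 else 0)"
    unfolding Psi_def using gs_orthonormal[OF nz] by blast
  have fx: "P k (Psi a k) = Psi a k" for a
    unfolding Psi_def by (rule gs_fixed) (auto simp: P_add P_scaleC V_fixed)
  have inV: "\<forall>a\<in>{1..m}. Psi a k \<in> range (blinfun_apply (P k))"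
    using fx by (metis rangeI)
  have "cspan ((\<lambda>a. Psi a k) ` {1..m}) = range (blinfun_apply (P k))"
    by (rule onb_spans[where w="\<lambda>a. Psi a k"]) (use proj inV on in auto)
  then show ?thesis unfolding is_onb_frame_def using on by blast
qed

lemma sm_xc: "smooth_fun (\<lambda>k. real N * xc k $ i - c)"
proof -
  have "linear (\<lambda>k. real N * xc k $ i)"
    unfolding xc_def
    by (rule linearI) (simp_all add: linear_add[OF matrix_vector_mul_linear] linear_scale[OF matrix_vector_mul_linear] algebra_simps)
  then have "bounded_linear (\<lambda>k. real N * xc k $ i)" by (simp add: linear_conv_bounded_linear)
  then show ?thesis by (intro sm_diff' sm_linear sm_const)
qed

lemma sm_wt: "smooth_fun (\<lambda>k. wt k n)"
  unfolding wt_def by (intro sm_prod sm_eta sm_xc) auto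

lemma Phit_smooth: "smooth_fun (Phit b)"
proof (rule sm_local)
  fix k0 :: "real^'d"
  obtain Kx where Kx: "Kx > 0" "\<And>v. norm (Ai *v v) \<le> norm v * Kx"
    using bounded_linear.pos_bounded[OF matrix_vector_mul_bounded_linear[of Ai]] by blast
  have Np: "0 < real N" using Npos by simp
  define \<rho> where "\<rho> = 1 / (real N * Kx)"
  have rho: "0 < \<rho>" using Kx Np by (simp add: \<rho>_def)
  define T0 where "T0 = {n::'d \<Rightarrow> int. \<forall>i. n i \<in> {\<lfloor>real N * xc k0 $ i\<rfloor> - 3 .. \<lfloor>real N * xc k0 $ i\<rfloor> + 3}}"
  have T0: "finite T0" unfolding T0_def by (rule finite_int_box)
  define g where "g = (\<lambda>k. \<Sum>n\<in>T0. wt k n *\<^sub>R Phi b (gp n))"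
  have sg: "smooth_fun g" unfolding g_def by (intro sm_sum sm_scaleR sm_wt sm_const T0)
  have sub: "Sk k \<subseteq> T0" if k: "k \<in> ball k0 \<rho>" for k
  proof
    fix n assume n: "n \<in> Sk k"
    have "norm (xc k - xc k0) \<le> norm (k - k0) * Kx"
      using Kx(2)[of "k - k0"] by (simp add: xc_def linear_diff[OF matrix_vector_mul_linear])
    also have "\<dots> < \<rho> * Kx" using k Kx by (simp add: dist_norm norm_minus_commute)
    also have "\<dots> = 1 / real N" using Kx by (simp add: \<rho>_def)
    finally have xn: "norm (xc k - xc k0) < 1 / real N" .
    show "n \<in> T0" unfolding T0_def
    proof (clarify)
      fix i
      have "\<bar>(xc k - xc k0) $ i\<bar> < 1 / real N" using component_le_norm_cart[of "xc k - xc k0" i] xn by linarith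
      then have "real N * \<bar>xc k $ i - xc k0 $ i\<bar> < 1" using Np by (simp add: field_simps)
      moreover have "\<bar>real N * xc k $ i - real N * xc k0 $ i\<bar> = real N * \<bar>xc k $ i - xc k0 $ i\<bar>"
        by (simp only: right_diff_distrib[symmetric] abs_mult abs_of_nat)
      ultimately have h1: "\<bar>real N * xc k $ i - real N * xc k0 $ i\<bar> < 1" by simp
      have h2: "\<bar>real N * xc k $ i - real_of_int (n i)\<bar> < 1" using n wt_nz unfolding Sk_def by blast
      define t where "t = real N * xc k0 $ i"
      have f1: "real_of_int \<lfloor>t\<rfloor> \<le> t" "t < real_of_int \<lfloor>t\<rfloor> + 1" by linarith+
      have h3: "t - 2 < real_of_int (n i)" "real_of_int (n i) < t + 2"
        using h1 h2 unfolding t_def by (auto simp only: abs_less_iff)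
      have e1: "real_of_int (\<lfloor>t\<rfloor> - 3) = real_of_int \<lfloor>t\<rfloor> - 3" "real_of_int (\<lfloor>t\<rfloor> + 3) = real_of_int \<lfloor>t\<rfloor> + 3" by simp_all
      have "real_of_int (\<lfloor>t\<rfloor> - 3) < real_of_int (n i)" unfolding e1 using h3 f1 by linarith
      then have a: "\<lfloor>t\<rfloor> - 3 < n i" by (simp only: of_int_less_iff)
      have "real_of_int (n i) < real_of_int (\<lfloor>t\<rfloor> + 3)" unfolding e1 using h3 f1 by linarith
      then have b: "n i < \<lfloor>t\<rfloor> + 3" by (simp only: of_int_less_iff)
      show "n i \<in> {\<lfloor>real N * xc k0 $ i\<rfloor> - 3 .. \<lfloor>real N * xc k0 $ i\<rfloor> + 3}" using a b by (simp add: t_def)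
    qed
  qed
  have eq: "Phit b k = g k" if k: "k \<in> ball k0 \<rho>" for k
    unfolding Phit_def g_def
    by (rule sum.mono_neutral_left[OF T0 sub[OF k]]) (auto simp: Sk_def)
  show "\<exists>U g. open U \<and> k0 \<in> U \<and> smooth_fun g \<and> (\<forall>k\<in>U. Phit b k = g k)"
    using eq sg rho by (intro exI[of _ "ball k0 \<rho>"] exI[of _ g]) auto
qed

lemma V_smooth: "b \<in> {1..m} \<Longrightarrow> smooth_fun (\<lambda>k. V k b)"
  unfolding V_def by (simp add: sm_bilinear[OF bounded_bilinear_blinfun_apply P1 Phit_smooth])

lemma Psi_smooth: "a \<in> {1..m} \<Longrightarrow> smooth_fun (Psi a)"
proof (induction a rule: less_induct)
  case (less a)
  define u where "u = (\<lambda>k. gsu (V k) a)"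
  have su: "smooth_fun u"
    unfolding u_def gsu_def
  proof (intro sm_diff' sm_sum)
    show "smooth_fun (\<lambda>k. V k a)" by (rule V_smooth[OF less.prems])
    fix c assume c: "c \<in> {1..<a}"
    then have c': "c \<in> {1..m}" using less.prems by auto
    have sc: "smooth_fun (\<lambda>k. gs (V k) c)" using less.IH[of c] c c' by (auto simp: Psi_def[abs_def])
    show "smooth_fun (\<lambda>k. cinner (gs (V k) c) (V k a) *\<^sub>C gs (V k) c)"
      by (intro sm_bilinear[OF bounded_bilinear_scaleC] sm_bilinear[OF bounded_bilinear_cinner] sc V_smooth less.prems)
  qed simp
  have pos: "0 < inner (u k) (u k)" for k
    using Psi_est[of k] less.prems by (auto simp: u_def)
  have eqP: "Psi a = (\<lambda>k. (inner (u k) (u k)) powr (-1/2) *\<^sub>R u k)"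
  proof
    fix k
    have "norm (u k) = (inner (u k) (u k)) powr (1/2)"
      using pos[of k] by (simp add: norm_eq_sqrt_inner powr_half_sqrt)
    then have "1 / norm (u k) = (inner (u k) (u k)) powr (-1/2)"
      using pos[of k] by (simp add: powr_minus_divide)
    then show "Psi a k = (inner (u k) (u k)) powr (-1/2) *\<^sub>R u k"
      by (simp add: Psi_def gs_gsu u_def)
  qed
  have "smooth_fun (\<lambda>k. (inner (u k) (u k)) powr (-1/2) *\<^sub>R u k)"
    by (intro sm_scaleR sm_powr sm_bilinear[OF bounded_bilinear_inner] su pos)
  then show ?case using eqP by simp
qed

end


lemma uc_lattice:
  fixes f :: "real^'d \<Rightarrow> 'h::real_normed_vector" and B Ai :: "real^'d^'d"
  assumes cont: "continuous_on UNIV f"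
    and BAi: "B ** Ai = mat 1"
    and inv: "\<And>k q n. norm (f (k + B *v (\<chi> i. real_of_int (n i))) - f (q + B *v (\<chi> i. real_of_int (n i)))) = norm (f k - f q)"
    and d: "0 < \<delta>"
  shows "\<exists>r>0. \<forall>k q. dist k q < r \<longrightarrow> norm (f k - f q) \<le> \<delta>"
proof -
  define F where "F = (\<lambda>x. B *v x) ` cbox (vec 0) (vec 1)"
  have cF: "compact F" unfolding F_def
    by (intro compact_continuous_image linear_continuous_on) (auto simp: matrix_vector_mul_bounded_linear)
  define F1 where "F1 = {x + y |x y. x \<in> F \<and> y \<in> cball 0 1}"
  have cF1: "compact F1" unfolding F1_def by (intro compact_sums cF compact_cball)
  have "uniformly_continuous_on F1 f"
    by (rule compact_uniformly_continuous[OF continuous_on_subset[OF cont] cF1]) auto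
  then obtain e where e: "e > 0" "\<And>x x'. x \<in> F1 \<Longrightarrow> x' \<in> F1 \<Longrightarrow> dist x' x < e \<Longrightarrow> dist (f x') (f x) < \<delta>"
    unfolding uniformly_continuous_on_def using d by metis
  show ?thesis
  proof (intro exI[of _ "min e 1"] conjI allI impI)
    show "0 < min e 1" using e by simp
    fix k q :: "real^'d" assume kq: "dist k q < min e 1"
    define n where "n = (\<lambda>i. \<lfloor>(Ai *v k) $ i\<rfloor>)"
    define l where "l = B *v (\<chi> i. real_of_int (n i))"
    define k0 where "k0 = k - l"
    define q0 where "q0 = q - l"
    have k0: "k0 = B *v (Ai *v k - (\<chi> i. real_of_int (n i)))"
      unfolding k0_def l_def by (simp add: matrix_vector_mult_diff_distrib matrix_vector_mul_assoc BAi)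
    have "Ai *v k - (\<chi> i. real_of_int (n i)) \<in> cbox (vec 0) (vec 1)"
      unfolding mem_box_cart n_def by (auto simp: floor_le_iff) linarith+
    then have k0F: "k0 \<in> F" unfolding F_def k0 by blast
    have k0F1: "k0 \<in> F1" unfolding F1_def using k0F by (intro CollectI exI[of _ k0] exI[of _ 0]) auto
    have dq: "dist k0 q0 = dist k q" by (simp add: k0_def q0_def dist_norm)
    have q0F1: "q0 \<in> F1" unfolding F1_def using k0F kq dq
      by (intro CollectI exI[of _ k0] exI[of _ "q0 - k0"]) (auto simp: dist_norm norm_minus_commute)
    have "norm (f k - f q) = norm (f (k0 + l) - f (q0 + l))" by (simp add: k0_def q0_def)
    also have "\<dots> = norm (f k0 - f q0)" unfolding l_def by (rule inv)
    also have "\<dots> = dist (f k0) (f q0)" by (simp add: dist_norm)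
    also have "\<dots> < \<delta>" using e(2)[OF q0F1 k0F1] kq dq by (simp add: dist_commute)
    finally show "norm (f k - f q) \<le> \<delta>" by simp
  qed
qed


context constr begin

lemma Psi_dist: "sqrt (\<Sum>a=1..m. (norm (Phi a k - Psi a k))\<^sup>2) \<le> (real m + 1) * 8^m * \<delta>"
proof -
  have t: "(norm (Phi a k - Psi a k))\<^sup>2 \<le> (8^m * \<delta>)\<^sup>2" if a: "a \<in> {1..m}" for a
  proof -
    have "norm (Phi a k - Psi a k) \<le> 8^a * \<delta>" using Psi_est[of k] a by (simp add: norm_minus_commute)
    also have "\<dots> \<le> 8^m * \<delta>" using a dpos by (intro mult_right_mono power_increasing) auto
    finally show ?thesis by (intro power_mono) auto
  qed
  have "(\<Sum>a=1..m. (norm (Phi a k - Psi a k))\<^sup>2) \<le> (\<Sum>a=1..m. (8^m * \<delta>)\<^sup>2)"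
    by (rule sum_mono) (use t in auto)
  also have "\<dots> = real m * (8^m * \<delta>)\<^sup>2" by simp
  also have "\<dots> \<le> ((real m + 1) * 8^m * \<delta>)\<^sup>2"
  proof -
    have "real m \<le> (real m + 1)\<^sup>2" by (simp add: power2_eq_square algebra_simps)
    then have "real m * (8^m * \<delta>)\<^sup>2 \<le> (real m + 1)\<^sup>2 * (8^m * \<delta>)\<^sup>2" by (intro mult_right_mono) auto
    then show ?thesis by (simp add: power_mult_distrib mult.assoc)
  qed
  finally have "sqrt (\<Sum>a=1..m. (norm (Phi a k - Psi a k))\<^sup>2) \<le> sqrt (((real m + 1) * 8^m * \<delta>)\<^sup>2)"
    by (rule real_sqrt_le_mono)
  also have "\<dots> = (real m + 1) * 8^m * \<delta>" using dpos by simp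
  finally show ?thesis .
qed

end

theorem mainTheorem3:
  fixes P :: "real^'d \<Rightarrow> ('h::{complex_inner_space, complete_space} \<Rightarrow>\<^sub>L 'h)"
    and L :: "(real^'d) set"
    and tau :: "real^'d \<Rightarrow> 'h \<Rightarrow> 'h"
    and Theta :: "'h \<Rightarrow> 'h"
    and m :: nat
    and Phi :: "nat \<Rightarrow> real^'d \<Rightarrow> 'h"
  assumes sep: "separable_space TYPE('h)"
    and lat: "is_lattice L"
    and proj: "\<forall>k. orth_projector (P k) \<and> has_cdim (range (blinfun_apply (P k))) m"
    and P1: "smooth_fun P"
    and P2: "unitary_rep L tau"
    and P2': "\<forall>k. \<forall>l\<in>L. \<forall>x. P (k + l) x = tau l (P k (inv (tau l) x))"
    and P3: "antiunitary_op Theta"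
    and P3': "\<forall>k x. P (- k) x = Theta (P k (inv Theta x))"
    and P3'': "Theta \<circ> Theta = id"
    and P4: "\<forall>l\<in>L. Theta \<circ> tau l = inv (tau l) \<circ> Theta"
    and onb: "\<forall>k. is_onb_frame P m Phi k"
    and cont: "\<forall>a\<in>{1..m}. continuous_on UNIV (Phi a)"
    and equiv: "\<forall>a\<in>{1..m}. \<forall>k. \<forall>l\<in>L. Phi a (k + l) = tau l (Phi a k)"
    and trs: "\<forall>a\<in>{1..m}. \<forall>k. Phi a (- k) = Theta (Phi a k)"
  shows "\<forall>\<epsilon>>0. \<exists>Psi :: nat \<Rightarrow> real^'d \<Rightarrow> 'h.
           (\<forall>k. is_onb_frame P m Psi k)
         \<and> (\<forall>a\<in>{1..m}. \<forall>k. \<forall>l\<in>L. Psi a (k + l) = tau l (Psi a k))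
         \<and> (\<forall>a\<in>{1..m}. \<forall>k. Psi a (- k) = Theta (Psi a k))
         \<and> (\<forall>a\<in>{1..m}. smooth_fun (Psi a))
         \<and> (SUP k. sqrt (\<Sum>a=1..m. (norm (Phi a k - Psi a k))\<^sup>2)) < \<epsilon>"
proof (intro allI impI)
  fix \<epsilon> :: real assume eps: "0 < \<epsilon>"
  obtain B :: "real^'d^'d" where B: "invertible B" and Ldef: "L = range (\<lambda>n :: 'd \<Rightarrow> int. B *v (\<chi> i. real_of_int (n i)))"
    using lat unfolding is_lattice_def by blast
  obtain Ai where BAi: "B ** Ai = mat 1" "Ai ** B = mat 1" using B unfolding invertible_def by blast
  define \<delta> where "\<delta> = min 1 (\<epsilon> / (2 * (real m + 1))) / 8^m"
  have dpos: "0 < \<delta>" using eps by (simp add: \<delta>_def)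
  have dsmall: "8^m * \<delta> \<le> 1" by (simp add: \<delta>_def)
  have deps: "(real m + 1) * 8^m * \<delta> < \<epsilon>"
  proof -
    have "(real m + 1) * 8^m * \<delta> = (real m + 1) * min 1 (\<epsilon> / (2 * (real m + 1)))" by (simp add: \<delta>_def)
    also have "\<dots> \<le> (real m + 1) * (\<epsilon> / (2 * (real m + 1)))" by (intro mult_left_mono) auto
    also have "\<dots> = \<epsilon> / 2"
    proof -
      have h: "\<And>M::real. M > 0 \<Longrightarrow> M * (\<epsilon> / (2 * M)) = \<epsilon> / 2" by (simp add: field_simps)
      show ?thesis by (rule h) simp
    qed
    finally show ?thesis using eps by simp
  qed
  have taulin: "linear (tau l)" if "l \<in> L" for l
    using P2 that unfolding unitary_rep_def unitary_op_def by (auto intro: clinear_linear)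
  have taunorm: "norm (tau l x) = norm x" if l: "l \<in> L" for l x
  proof -
    have "cinner (tau l x) (tau l x) = cinner x x" using P2 l unfolding unitary_rep_def unitary_op_def by blast
    then have "(norm (tau l x))\<^sup>2 = (norm x)\<^sup>2" unfolding cinner_self of_real_eq_iff .
    then show ?thesis by (simp add: power2_eq_iff_nonneg)
  qed
  have ucA: "\<forall>a\<in>{1..m}. \<exists>r>0. \<forall>k q. dist k q < r \<longrightarrow> norm (Phi a k - Phi a q) \<le> \<delta>"
  proof
    fix a assume a: "a \<in> {1..m}"
    show "\<exists>r>0. \<forall>k q. dist k q < r \<longrightarrow> norm (Phi a k - Phi a q) \<le> \<delta>"
    proof (rule uc_lattice[OF _ BAi(1) _ dpos])
      show "continuous_on UNIV (Phi a)" using cont a by blast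
      fix k q :: "real^'d" and n :: "'d \<Rightarrow> int"
      define l where "l = B *v (\<chi> i. real_of_int (n i))"
      have l: "l \<in> L" unfolding Ldef l_def by blast
      have "norm (Phi a (k + l) - Phi a (q + l)) = norm (tau l (Phi a k - Phi a q))"
        using equiv a l by (simp add: linear_diff[OF taulin[OF l]])
      also have "\<dots> = norm (Phi a k - Phi a q)" by (rule taunorm[OF l])
      finally show "norm (Phi a (k + B *v (\<chi> i. real_of_int (n i))) - Phi a (q + B *v (\<chi> i. real_of_int (n i)))) = norm (Phi a k - Phi a q)"
        by (simp add: l_def)
    qed
  qed
  obtain r where r: "r > 0" "\<forall>a\<in>{1..m}. \<forall>k q. dist k q < r \<longrightarrow> norm (Phi a k - Phi a q) \<le> \<delta>"
    using finite_common_radius[of "{1..m}" "\<lambda>a r. \<forall>k q. dist k q < r \<longrightarrow> norm (Phi a k - Phi a q) \<le> \<delta>", OF _ ucA]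
    by auto
  obtain Kb where Kb: "Kb > 0" "\<And>v. norm (B *v v) \<le> norm v * Kb"
    using bounded_linear.pos_bounded[OF matrix_vector_mul_bounded_linear[of B]] by blast
  define N :: nat where "N = nat \<lceil>real CARD('d) * Kb / r\<rceil> + 1"
  have Npos: "N \<ge> 1" by (simp add: N_def)
  have NN: "real CARD('d) * Kb / r < real N"
    unfolding N_def by linarith
  have grid: "\<forall>v. (\<forall>i. \<bar>v$i\<bar> < 1 / real N) \<longrightarrow> norm (B *v v) < r"
  proof (intro allI impI)
    fix v :: "real^'d" assume v: "\<forall>i. \<bar>v$i\<bar> < 1 / real N"
    have Np: "0 < real N" using Npos by simp
    have "norm v \<le> (\<Sum>i\<in>UNIV. \<bar>v$i\<bar>)" by (rule norm_le_l1_cart)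
    also have "\<dots> \<le> (\<Sum>i\<in>(UNIV::'d set). 1 / real N)" by (rule sum_mono) (use v in \<open>auto intro: less_imp_le\<close>)
    also have "\<dots> = real CARD('d) / real N" by simp
    finally have nv: "norm v \<le> real CARD('d) / real N" .
    have "norm (B *v v) \<le> norm v * Kb" by (rule Kb(2))
    also have "\<dots> \<le> real CARD('d) / real N * Kb" using nv Kb by (intro mult_right_mono) auto
    also have "\<dots> < r"
    proof -
      have "real CARD('d) * Kb < r * real N" using NN r Np by (simp add: field_simps)
      then show ?thesis using Np by (simp add: field_simps)
    qed
    finally show "norm (B *v v) < r" .
  qed
  interpret C: constr P L tau Theta m Phi B Ai N \<delta> r
    by unfold_locales (use proj P1 P2 P2' P3 P3' onb equiv trs BAi Ldef Npos dpos dsmall r grid in auto)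
  show "\<exists>Psi :: nat \<Rightarrow> real^'d \<Rightarrow> 'h.
           (\<forall>k. is_onb_frame P m Psi k)
         \<and> (\<forall>a\<in>{1..m}. \<forall>k. \<forall>l\<in>L. Psi a (k + l) = tau l (Psi a k))
         \<and> (\<forall>a\<in>{1..m}. \<forall>k. Psi a (- k) = Theta (Psi a k))
         \<and> (\<forall>a\<in>{1..m}. smooth_fun (Psi a))
         \<and> (SUP k. sqrt (\<Sum>a=1..m. (norm (Phi a k - Psi a k))\<^sup>2)) < \<epsilon>"
  proof (intro exI[of _ C.Psi] conjI ballI allI)
    show "is_onb_frame P m C.Psi k" for k by (rule C.Psi_onb)
    show "C.Psi a (k + l) = tau l (C.Psi a k)" if "l \<in> L" for a k l by (rule C.Psi_shift[OF that])
    show "C.Psi a (- k) = Theta (C.Psi a k)" for a k by (rule C.Psi_neg)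
    show "smooth_fun (C.Psi a)" if "a \<in> {1..m}" for a by (rule C.Psi_smooth[OF that])
    have "(SUP k. sqrt (\<Sum>a=1..m. (norm (Phi a k - C.Psi a k))\<^sup>2)) \<le> (real m + 1) * 8^m * \<delta>"
    proof (rule cSUP_least)
      fix k show "sqrt (\<Sum>a=1..m. (norm (Phi a k - C.Psi a k))\<^sup>2) \<le> (real m + 1) * 8^m * \<delta>"
        by (rule C.Psi_dist)
    qed simp
    then show "(SUP k. sqrt (\<Sum>a=1..m. (norm (Phi a k - C.Psi a k))\<^sup>2)) < \<epsilon>" using deps by linarith
  qed
qed


end
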